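(* The full subcategory $\mathbf{T_D Top_S}$ of $\mathbf{Top_S}$ consisting of $T_D$-spaces is equivalent to the opposite of the full subcategory $\mathbf{STDMT_P}$ of $\mathbf{MT_P}$ consisting of spatial $T_D$-algebras.
   Context: A space is $T_D$ if every point $x$ is locally closed ($\{x\}$ is closed in some open neighborhood of $x$). Soberification: $sX=\mathrm{pt}\,\Omega X$ (completely prime filters of the frame of opens), $\lambda_X(x)=\{U\text{ open}: x\in U\}$. A sober map $f:X\rightsquigarrow Y$ is a continuous map $X\to sY$; composition $g\bullet f=\lambda_{sZ}^{-1}\circ sg\circ f$, identities $\lambda_X$; this is $\mathbf{Top_S}$. An MT-algebra is a complete boolean algebra $M$ with $\square$ satisfying $\square1=1$, $\square(a\wedge b)=\square a\wedge\square b$, $\square a\le a$, $\square a\le\square\square a$; $\Diamond=\neg\square\neg$; open: $\square a=a$; locally closed: $a=\square b\wedge\Diamond c$; $M$ is $T_D$ if every element is a join of locally closed elements; $M$ is spatial if $a\mapsto\{x\text{ atom}: x\le a\}$ is injective. A proximity morphism $f:M\to N$ is a map with (P1) $f|_{\mathcal O M}:\mathcal O M\to\mathcal O N$ a frame morphism; (P2) $f(a\wedge b)=f(a)\wedge f(b)$; (P3) $f(\bigvee S)=\bigvee f[S]$ for finite $S\subseteq\mathcal{LC}M$; (P4) $f(a)=\bigvee\{f(x):x\in\mathcal{LC}M,x\le a\}$. $\mathbf{MT_P}$: MT-algebras with proximity morphisms, composition $(g\star f)(a)=\bigvee\{g(f(x)):x\in\mathcal{LC}M_1,x\le a\}$,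 identities $1_M(a)=\bigvee\{x\in\mathcal{LC}M:x\le a\}$. *)

theory Defs
  imports "HOL-Analysis.Analysis"
begin

section \<open>T_D spaces and the category Top_S\<close>

definition TD_space :: "'a topology \<Rightarrow> bool" where
  "TD_space X \<longleftrightarrow> (\<forall>x\<in>topspace X. \<exists>U. openin X U \<and> x \<in> U \<and> closedin (subtopology X U) {x})"

text \<open>Completely prime filters of the frame of opens of X (points of the soberification).\<close>
definition cp_filter :: "'a topology \<Rightarrow> 'a set set \<Rightarrow> bool" where
  "cp_filter X P \<longleftrightarrow>
     P \<subseteq> {U. openin X U} \<and>
     topspace X \<in> P \<and>
     (\<forall>U V. U \<in> P \<and> V \<in> P \<longrightarrow> U \<inter> V \<in> P) \<and>
     (\<forall>U V. U \<in> P \<and> openin X V \<and> U \<subseteq> V \<longrightarrow> V \<in> P) \<and>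
     (\<forall>\<U>. \<U> \<subseteq> {U. openin X U} \<and> \<Union>\<U> \<in> P \<longrightarrow> (\<exists>U\<in>\<U>. U \<in> P))"

definition sob_pts :: "'a topology \<Rightarrow> 'a set set set" where
  "sob_pts X = {P. cp_filter X P}"

text \<open>The soberification sX = pt(Omega X), with opens the sets {P. U \<in> P}, U open.\<close>
definition sob_top :: "'a topology \<Rightarrow> 'a set set topology" where
  "sob_top X = topology (\<lambda>W. \<exists>U. openin X U \<and> W = {P \<in> sob_pts X. U \<in> P})"

definition lam :: "'a topology \<Rightarrow> 'a \<Rightarrow> 'a set set" where
  "lam X x = {U. openin X U \<and> x \<in> U}"

definition s_map :: "'a topology \<Rightarrow> 'b topology \<Rightarrow> ('a \<Rightarrow> 'b) \<Rightarrow> 'a set set \<Rightarrow> 'b set set" where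
  "s_map X Y g p = {W. openin Y W \<and> {x \<in> topspace X. g x \<in> W} \<in> p}"

text \<open>Sober maps X \<leadsto> Y: continuous maps X \<rightarrow> sY (taken extensional on topspace X).\<close>
definition sober_hom :: "'a topology \<Rightarrow> 'b topology \<Rightarrow> ('a \<Rightarrow> 'b set set) set" where
  "sober_hom X Y = {f. continuous_map X (sob_top Y) f \<and> f \<in> extensional (topspace X)}"

definition sober_id :: "'a topology \<Rightarrow> 'a \<Rightarrow> 'a set set" where
  "sober_id X = restrict (lam X) (topspace X)"

definition sober_comp :: "'a topology \<Rightarrow> 'b topology \<Rightarrow> 'c topology \<Rightarrow>
    ('b \<Rightarrow> 'c set set) \<Rightarrow> ('a \<Rightarrow> 'b set set) \<Rightarrow> 'a \<Rightarrow> 'c set set" where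
  "sober_comp X Y Z g f =
     restrict (\<lambda>x. inv_into (topspace (sob_top Z)) (lam (sob_top Z))
                     (s_map Y (sob_top Z) g (f x))) (topspace X)"

section \<open>MT-algebras and the category MT_P\<close>

text \<open>An MT-algebra presented by a carrier set, its order, and the interior operator.\<close>
record 'b mt =
  mt_carrier :: "'b set"
  mt_le :: "'b \<Rightarrow> 'b \<Rightarrow> bool"
  mt_box :: "'b \<Rightarrow> 'b"

definition is_lub :: "'b mt \<Rightarrow> 'b set \<Rightarrow> 'b \<Rightarrow> bool" where
  "is_lub M S x \<longleftrightarrow> x \<in> mt_carrier M \<and> (\<forall>s\<in>S. mt_le M s x) \<and>
     (\<forall>y\<in>mt_carrier M. (\<forall>s\<in>S. mt_le M s y) \<longrightarrow> mt_le M x y)"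

definition is_glb :: "'b mt \<Rightarrow> 'b set \<Rightarrow> 'b \<Rightarrow> bool" where
  "is_glb M S x \<longleftrightarrow> x \<in> mt_carrier M \<and> (\<forall>s\<in>S. mt_le M x s) \<and>
     (\<forall>y\<in>mt_carrier M. (\<forall>s\<in>S. mt_le M y s) \<longrightarrow> mt_le M y x)"

definition mt_Join :: "'b mt \<Rightarrow> 'b set \<Rightarrow> 'b" where
  "mt_Join M S = (THE x. is_lub M S x)"

definition mt_Meet :: "'b mt \<Rightarrow> 'b set \<Rightarrow> 'b" where
  "mt_Meet M S = (THE x. is_glb M S x)"

definition mt_join :: "'b mt \<Rightarrow> 'b \<Rightarrow> 'b \<Rightarrow> 'b" where
  "mt_join M a b = mt_Join M {a, b}"

definition mt_meet :: "'b mt \<Rightarrow> 'b \<Rightarrow> 'b \<Rightarrow> 'b" where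
  "mt_meet M a b = mt_Meet M {a, b}"

definition mt_top :: "'b mt \<Rightarrow> 'b" where
  "mt_top M = mt_Join M (mt_carrier M)"

definition mt_bot :: "'b mt \<Rightarrow> 'b" where
  "mt_bot M = mt_Join M {}"

definition mt_neg :: "'b mt \<Rightarrow> 'b \<Rightarrow> 'b" where
  "mt_neg M a = (THE b. b \<in> mt_carrier M \<and> mt_join M a b = mt_top M \<and> mt_meet M a b = mt_bot M)"

definition complete_boolean :: "'b mt \<Rightarrow> bool" where
  "complete_boolean M \<longleftrightarrow>
     (\<forall>a\<in>mt_carrier M. mt_le M a a) \<and>
     (\<forall>a\<in>mt_carrier M. \<forall>b\<in>mt_carrier M. mt_le M a b \<and> mt_le M b a \<longrightarrow> a = b) \<and>
     (\<forall>a\<in>mt_carrier M. \<forall>b\<in>mt_carrier M. \<forall>c\<in>mt_carrier M.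
        mt_le M a b \<and> mt_le M b c \<longrightarrow> mt_le M a c) \<and>
     (\<forall>S. S \<subseteq> mt_carrier M \<longrightarrow> (\<exists>x. is_lub M S x)) \<and>
     (\<forall>a\<in>mt_carrier M. \<forall>b\<in>mt_carrier M. \<forall>c\<in>mt_carrier M.
        mt_meet M a (mt_join M b c) = mt_join M (mt_meet M a b) (mt_meet M a c)) \<and>
     (\<forall>a\<in>mt_carrier M. \<exists>b\<in>mt_carrier M.
        mt_join M a b = mt_top M \<and> mt_meet M a b = mt_bot M)"

definition MT_algebra :: "'b mt \<Rightarrow> bool" where
  "MT_algebra M \<longleftrightarrow> complete_boolean M \<and>
     (\<forall>a\<in>mt_carrier M. mt_box M a \<in> mt_carrier M) \<and>
     mt_box M (mt_top M) = mt_top M \<and>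
     (\<forall>a\<in>mt_carrier M. \<forall>b\<in>mt_carrier M.
        mt_box M (mt_meet M a b) = mt_meet M (mt_box M a) (mt_box M b)) \<and>
     (\<forall>a\<in>mt_carrier M. mt_le M (mt_box M a) a) \<and>
     (\<forall>a\<in>mt_carrier M. mt_le M (mt_box M a) (mt_box M (mt_box M a)))"

definition mt_dia :: "'b mt \<Rightarrow> 'b \<Rightarrow> 'b" where
  "mt_dia M a = mt_neg M (mt_box M (mt_neg M a))"

definition mt_opens :: "'b mt \<Rightarrow> 'b set" where
  "mt_opens M = {a \<in> mt_carrier M. mt_box M a = a}"

definition mt_lc :: "'b mt \<Rightarrow> 'b set" where
  "mt_lc M = {a \<in> mt_carrier M. \<exists>b\<in>mt_carrier M. \<exists>c\<in>mt_carrier M.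
                 a = mt_meet M (mt_box M b) (mt_dia M c)}"

definition TD_algebra :: "'b mt \<Rightarrow> bool" where
  "TD_algebra M \<longleftrightarrow> (\<forall>a\<in>mt_carrier M. \<exists>S. S \<subseteq> mt_lc M \<and> a = mt_Join M S)"

definition mt_atoms :: "'b mt \<Rightarrow> 'b set" where
  "mt_atoms M = {x \<in> mt_carrier M. x \<noteq> mt_bot M \<and>
      (\<forall>y\<in>mt_carrier M. mt_le M y x \<longrightarrow> y = mt_bot M \<or> y = x)}"

definition atoms_below :: "'b mt \<Rightarrow> 'b \<Rightarrow> 'b set" where
  "atoms_below M a = {x \<in> mt_atoms M. mt_le M x a}"

definition spatial :: "'b mt \<Rightarrow> bool" where
  "spatial M \<longleftrightarrow> inj_on (atoms_below M) (mt_carrier M)"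

definition STDMT :: "'b mt \<Rightarrow> bool" where
  "STDMT M \<longleftrightarrow> MT_algebra M \<and> TD_algebra M \<and> spatial M"

definition proximity :: "'b mt \<Rightarrow> 'c mt \<Rightarrow> ('b \<Rightarrow> 'c) \<Rightarrow> bool" where
  "proximity M N f \<longleftrightarrow>
     f \<in> mt_carrier M \<rightarrow> mt_carrier N \<and>
     \<comment> \<open>(P1) restriction to opens is a frame morphism O M \<rightarrow> O N\<close>
     (\<forall>a\<in>mt_opens M. f a \<in> mt_opens N) \<and>
     f (mt_top M) = mt_top N \<and>
     (\<forall>a\<in>mt_opens M. \<forall>b\<in>mt_opens M. f (mt_meet M a b) = mt_meet N (f a) (f b)) \<and>
     (\<forall>S. S \<subseteq> mt_opens M \<longrightarrow> f (mt_Join M S) = mt_Join N (f ` S)) \<and>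
     \<comment> \<open>(P2)\<close>
     (\<forall>a\<in>mt_carrier M. \<forall>b\<in>mt_carrier M. f (mt_meet M a b) = mt_meet N (f a) (f b)) \<and>
     \<comment> \<open>(P3)\<close>
     (\<forall>S. finite S \<and> S \<subseteq> mt_lc M \<longrightarrow> f (mt_Join M S) = mt_Join N (f ` S)) \<and>
     \<comment> \<open>(P4)\<close>
     (\<forall>a\<in>mt_carrier M. f a = mt_Join N {f x | x. x \<in> mt_lc M \<and> mt_le M x a})"

definition prox_hom :: "'b mt \<Rightarrow> 'c mt \<Rightarrow> ('b \<Rightarrow> 'c) set" where
  "prox_hom M N = {f. proximity M N f \<and> f \<in> extensional (mt_carrier M)}"

definition prox_id :: "'b mt \<Rightarrow> 'b \<Rightarrow> 'b" where
  "prox_id M = restrict (\<lambda>a. mt_Join M {x \<in> mt_lc M. mt_le M x a}) (mt_carrier M)"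

definition prox_comp :: "'b mt \<Rightarrow> 'd mt \<Rightarrow> ('c \<Rightarrow> 'd) \<Rightarrow> ('b \<Rightarrow> 'c) \<Rightarrow> 'b \<Rightarrow> 'd" where
  "prox_comp M1 M3 g f =
     restrict (\<lambda>a. mt_Join M3 {g (f x) | x. x \<in> mt_lc M1 \<and> mt_le M1 x a}) (mt_carrier M1)"

section \<open>The atom-space functor STDMT_P^op \<rightarrow> T_D Top_S\<close>

definition at_space :: "'b mt \<Rightarrow> 'b topology" where
  "at_space M = topology (\<lambda>W. \<exists>u\<in>mt_opens M. W = atoms_below M u)"

definition at_map :: "'b mt \<Rightarrow> 'c mt \<Rightarrow> ('b \<Rightarrow> 'c) \<Rightarrow> 'c \<Rightarrow> 'b set set" where
  "at_map M N f = restrict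
     (\<lambda>y. {W. \<exists>u\<in>mt_opens M. W = atoms_below M u \<and> mt_le N y (f u)}) (mt_atoms N)"

end

theory Submission
  imports Defs
begin

locale cb =
  fixes M :: "'b mt"
  assumes cb: "complete_boolean M"
begin

abbreviation "C \<equiv> mt_carrier M"

lemma cbp: "(\<forall>a\<in>C. mt_le M a a)" "(\<forall>a\<in>C. \<forall>b\<in>C. mt_le M a b \<and> mt_le M b a \<longrightarrow> a = b)"
  "(\<forall>a\<in>C. \<forall>b\<in>C. \<forall>c\<in>C. mt_le M a b \<and> mt_le M b c \<longrightarrow> mt_le M a c)"
  "(\<forall>S. S \<subseteq> C \<longrightarrow> (\<exists>x. is_lub M S x))"
  "(\<forall>a\<in>C. \<forall>b\<in>C. \<forall>c\<in>C. mt_meet M a (mt_join M b c) = mt_join M (mt_meet M a b) (mt_meet M a c))"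
  "(\<forall>a\<in>C. \<exists>b\<in>C. mt_join M a b = mt_top M \<and> mt_meet M a b = mt_bot M)"
  using cb[unfolded complete_boolean_def]
  by - (erule conjE, assumption | (erule conjE)+, assumption)+

lemma le_refl: "a \<in> C \<Longrightarrow> mt_le M a a"
  using cbp(1) by blast
lemma le_antisym: "a \<in> C \<Longrightarrow> b \<in> C \<Longrightarrow> mt_le M a b \<Longrightarrow> mt_le M b a \<Longrightarrow> a = b"
  using cbp(2) by blast
lemma le_trans: "a \<in> C \<Longrightarrow> b \<in> C \<Longrightarrow> c \<in> C \<Longrightarrow> mt_le M a b \<Longrightarrow> mt_le M b c \<Longrightarrow> mt_le M a c"
  using cbp(3) by blast
lemma lub_ex: "S \<subseteq> C \<Longrightarrow> \<exists>x. is_lub M S x"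
  using cbp(4) by blast
lemma distrib: "a \<in> C \<Longrightarrow> b \<in> C \<Longrightarrow> c \<in> C \<Longrightarrow>
        mt_meet M a (mt_join M b c) = mt_join M (mt_meet M a b) (mt_meet M a c)"
  using cbp(5) by blast
lemma compl_ex: "a \<in> C \<Longrightarrow> \<exists>b\<in>C. mt_join M a b = mt_top M \<and> mt_meet M a b = mt_bot M"
  using cbp(6) by blast

lemma lub_unique: "is_lub M S x \<Longrightarrow> is_lub M S y \<Longrightarrow> x = y"
  unfolding is_lub_def by (meson le_antisym)
lemma glb_unique: "is_glb M S x \<Longrightarrow> is_glb M S y \<Longrightarrow> x = y"
  unfolding is_glb_def by (meson le_antisym)

lemma Join_lub: "S \<subseteq> C \<Longrightarrow> is_lub M S (mt_Join M S)"
proof -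
  assume "S \<subseteq> C"
  then obtain x where x: "is_lub M S x" using lub_ex by blast
  have "\<exists>!x. is_lub M S x" using x lub_unique by blast
  from theI'[OF this] show ?thesis unfolding mt_Join_def .
qed

lemma Join_in: "S \<subseteq> C \<Longrightarrow> mt_Join M S \<in> C"
  using Join_lub unfolding is_lub_def by blast
lemma Join_upper: "S \<subseteq> C \<Longrightarrow> s \<in> S \<Longrightarrow> mt_le M s (mt_Join M S)"
  using Join_lub unfolding is_lub_def by blast
lemma Join_least: "S \<subseteq> C \<Longrightarrow> y \<in> C \<Longrightarrow> (\<And>s. s \<in> S \<Longrightarrow> mt_le M s y) \<Longrightarrow> mt_le M (mt_Join M S) y"
  using Join_lub unfolding is_lub_def by blast
lemma Join_eqI: "S \<subseteq> C \<Longrightarrow> is_lub M S x \<Longrightarrow> mt_Join M S = x"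
  using Join_lub lub_unique by blast

lemma glb_ex: assumes "S \<subseteq> C" shows "is_glb M S (mt_Join M {y\<in>C. \<forall>s\<in>S. mt_le M y s})"
proof -
  let ?L = "{y\<in>C. \<forall>s\<in>S. mt_le M y s}"
  have L: "?L \<subseteq> C" by blast
  show ?thesis unfolding is_glb_def
    using Join_in[OF L] Join_least[OF L] Join_upper[OF L] assms by blast
qed

lemma Meet_glb: "S \<subseteq> C \<Longrightarrow> is_glb M S (mt_Meet M S)"
proof -
  assume "S \<subseteq> C"
  then have x: "is_glb M S (mt_Join M {y\<in>C. \<forall>s\<in>S. mt_le M y s})" by (rule glb_ex)
  have "\<exists>!x. is_glb M S x" using x glb_unique by blast
  from theI'[OF this] show ?thesis unfolding mt_Meet_def .
qed

lemma meet_in: "a \<in> C \<Longrightarrow> b \<in> C \<Longrightarrow> mt_meet M a b \<in> C"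
  using Meet_glb[of "{a,b}"] unfolding mt_meet_def is_glb_def by blast
lemma meet_le1: "a \<in> C \<Longrightarrow> b \<in> C \<Longrightarrow> mt_le M (mt_meet M a b) a"
  using Meet_glb[of "{a,b}"] unfolding mt_meet_def is_glb_def by blast
lemma meet_le2: "a \<in> C \<Longrightarrow> b \<in> C \<Longrightarrow> mt_le M (mt_meet M a b) b"
  using Meet_glb[of "{a,b}"] unfolding mt_meet_def is_glb_def by blast
lemma meet_greatest: "a \<in> C \<Longrightarrow> b \<in> C \<Longrightarrow> y \<in> C \<Longrightarrow> mt_le M y a \<Longrightarrow> mt_le M y b \<Longrightarrow> mt_le M y (mt_meet M a b)"
  using Meet_glb[of "{a,b}"] unfolding mt_meet_def is_glb_def by blast
lemma meet_comm: "mt_meet M a b = mt_meet M b a"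
  unfolding mt_meet_def by (simp add: insert_commute)
lemma meet_absorb: "a \<in> C \<Longrightarrow> b \<in> C \<Longrightarrow> mt_le M a b \<Longrightarrow> mt_meet M a b = a"
  by (meson le_antisym le_refl meet_greatest meet_in meet_le1)
lemma le_iff_meet: "a \<in> C \<Longrightarrow> b \<in> C \<Longrightarrow> mt_le M a b \<longleftrightarrow> mt_meet M a b = a"
  by (metis meet_absorb meet_le2)

lemma join_in: "a \<in> C \<Longrightarrow> b \<in> C \<Longrightarrow> mt_join M a b \<in> C"
  unfolding mt_join_def by (intro Join_in) auto
lemma join_ge1: "a \<in> C \<Longrightarrow> b \<in> C \<Longrightarrow> mt_le M a (mt_join M a b)"
  unfolding mt_join_def by (intro Join_upper) auto
lemma join_ge2: "a \<in> C \<Longrightarrow> b \<in> C \<Longrightarrow> mt_le M b (mt_join M a b)"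
  unfolding mt_join_def by (intro Join_upper) auto
lemma join_least: "a \<in> C \<Longrightarrow> b \<in> C \<Longrightarrow> y \<in> C \<Longrightarrow> mt_le M a y \<Longrightarrow> mt_le M b y \<Longrightarrow> mt_le M (mt_join M a b) y"
  unfolding mt_join_def by (intro Join_least) auto
lemma join_absorb: "a \<in> C \<Longrightarrow> b \<in> C \<Longrightarrow> mt_le M a b \<Longrightarrow> mt_join M a b = b"
  by (meson join_ge2 join_in join_least le_antisym le_refl)

lemma top_in: "mt_top M \<in> C"
  unfolding mt_top_def by (rule Join_in) auto
lemma le_top: "a \<in> C \<Longrightarrow> mt_le M a (mt_top M)"
  unfolding mt_top_def by (rule Join_upper) auto
lemma bot_in: "mt_bot M \<in> C"
  unfolding mt_bot_def by (rule Join_in) auto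
lemma bot_le: "a \<in> C \<Longrightarrow> mt_le M (mt_bot M) a"
  unfolding mt_bot_def by (rule Join_least) auto

lemma compl_unique:
  assumes a: "a \<in> C" and b: "b \<in> C" and c: "c \<in> C"
    and "mt_join M a b = mt_top M" "mt_meet M a b = mt_bot M"
    and "mt_join M a c = mt_top M" "mt_meet M a c = mt_bot M"
  shows "b = c"
proof -
  have "b = mt_meet M b (mt_join M a c)"
    using assms by (metis le_top meet_absorb top_in)
  also have "\<dots> = mt_join M (mt_meet M b a) (mt_meet M b c)" using distrib a b c by blast
  also have "\<dots> = mt_meet M b c"
    using assms by (metis bot_le join_absorb meet_comm meet_in)
  finally have 1: "b = mt_meet M b c" .
  have "c = mt_meet M c (mt_join M a b)"
    using assms by (metis le_top meet_absorb top_in)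
  also have "\<dots> = mt_join M (mt_meet M c a) (mt_meet M c b)" using distrib a b c by blast
  also have "\<dots> = mt_meet M c b"
    using assms by (metis bot_le join_absorb meet_comm meet_in)
  finally have "c = mt_meet M c b" .
  with 1 show ?thesis by (metis meet_comm)
qed

lemma neg_props: assumes a: "a \<in> C"
  shows "mt_neg M a \<in> C \<and> mt_join M a (mt_neg M a) = mt_top M \<and> mt_meet M a (mt_neg M a) = mt_bot M"
proof -
  obtain b where b: "b \<in> C" "mt_join M a b = mt_top M" "mt_meet M a b = mt_bot M"
    using compl_ex a by blast
  show ?thesis unfolding mt_neg_def
    by (rule theI[of _ b]) (use b compl_unique[OF a] in blast)+
qed

lemma neg_in: "a \<in> C \<Longrightarrow> mt_neg M a \<in> C" using neg_props by blast
lemma neg_join: "a \<in> C \<Longrightarrow> mt_join M a (mt_neg M a) = mt_top M" using neg_props by blast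
lemma neg_meet: "a \<in> C \<Longrightarrow> mt_meet M a (mt_neg M a) = mt_bot M" using neg_props by blast

lemma neg_neg: "a \<in> C \<Longrightarrow> mt_neg M (mt_neg M a) = a"
proof -
  assume a: "a \<in> C"
  have j: "mt_join M (mt_neg M a) a = mt_top M"
    using neg_join[OF a] unfolding mt_join_def by (simp add: insert_commute)
  show ?thesis
    using compl_unique[OF neg_in[OF a] neg_in[OF neg_in[OF a]] a]
      neg_join[OF neg_in[OF a]] neg_meet[OF neg_in[OF a]] j neg_meet[OF a] meet_comm by metis
qed

lemma le_neg_if: assumes s: "s \<in> C" and x: "x \<in> C" and m: "mt_meet M s x = mt_bot M"
  shows "mt_le M s (mt_neg M x)"
proof -
  have j: "mt_join M x (mt_neg M x) = mt_top M" by (rule neg_join[OF x])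
  have "s = mt_meet M s (mt_join M x (mt_neg M x))"
    using j s by (metis le_top meet_absorb top_in)
  also have "\<dots> = mt_join M (mt_meet M s x) (mt_meet M s (mt_neg M x))"
    using distrib s x neg_in by blast
  also have "\<dots> = mt_meet M s (mt_neg M x)"
    using m join_absorb[OF bot_in meet_in[OF s neg_in[OF x]] bot_le[OF meet_in[OF s neg_in[OF x]]]] by simp
  finally show ?thesis using meet_le2 neg_in s x by metis
qed

lemma atom_in: "x \<in> mt_atoms M \<Longrightarrow> x \<in> C" unfolding mt_atoms_def by blast

lemma atom_meet: assumes x: "x \<in> mt_atoms M" and s: "s \<in> C"
  shows "mt_meet M x s = mt_bot M \<or> mt_le M x s"
proof -
  have xC: "x \<in> C" using atom_in x by blast
  have "mt_meet M x s = mt_bot M \<or> mt_meet M x s = x"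
    using x meet_in[OF xC s] meet_le1[OF xC s] unfolding mt_atoms_def by blast
  thus ?thesis using meet_le2[OF xC s] by metis
qed

lemma atom_prime:
  assumes x: "x \<in> mt_atoms M" and S: "S \<subseteq> C" and le: "mt_le M x (mt_Join M S)"
  shows "\<exists>s\<in>S. mt_le M x s"
proof (rule ccontr)
  assume "\<not> ?thesis"
  hence "\<forall>s\<in>S. mt_meet M x s = mt_bot M" using atom_meet x S by blast
  hence "\<forall>s\<in>S. mt_le M s (mt_neg M x)"
    using le_neg_if atom_in[OF x] S meet_comm by (metis subsetD)
  hence "mt_le M (mt_Join M S) (mt_neg M x)"
    using Join_least S neg_in atom_in[OF x] by blast
  hence "mt_le M x (mt_neg M x)"
    using le_trans atom_in[OF x] Join_in[OF S] neg_in le by blast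
  hence "mt_meet M x (mt_neg M x) = x" using meet_absorb atom_in[OF x] neg_in by blast
  hence "x = mt_bot M" using neg_meet atom_in[OF x] by metis
  thus False using x unfolding mt_atoms_def by blast
qed

end


definition frame_hom :: "'a topology \<Rightarrow> 'b topology \<Rightarrow> ('b set \<Rightarrow> 'a set) \<Rightarrow> bool" where
  "frame_hom X Y \<phi> \<longleftrightarrow> (\<forall>V. openin Y V \<longrightarrow> openin X (\<phi> V)) \<and> \<phi> (topspace Y) = topspace X \<and>
     (\<forall>U V. openin Y U \<longrightarrow> openin Y V \<longrightarrow> \<phi> (U \<inter> V) = \<phi> U \<inter> \<phi> V) \<and>
     (\<forall>\<U>. (\<forall>U\<in>\<U>. openin Y U) \<longrightarrow> \<phi> (\<Union>\<U>) = \<Union>(\<phi> ` \<U>))"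

definition pt :: "'a topology \<Rightarrow> 'b topology \<Rightarrow> ('b set \<Rightarrow> 'a set) \<Rightarrow> 'a \<Rightarrow> 'b set set" where
  "pt X Y \<phi> = restrict (\<lambda>x. {V. openin Y V \<and> x \<in> \<phi> V}) (topspace X)"

lemma cp_sub: "cp_filter X P \<Longrightarrow> U \<in> P \<Longrightarrow> openin X U"
  unfolding cp_filter_def by blast
lemma cp_top: "cp_filter X P \<Longrightarrow> topspace X \<in> P"
  unfolding cp_filter_def by blast
lemma cp_int: "cp_filter X P \<Longrightarrow> U \<in> P \<Longrightarrow> V \<in> P \<Longrightarrow> U \<inter> V \<in> P"
  unfolding cp_filter_def by blast
lemma cp_up: "cp_filter X P \<Longrightarrow> U \<in> P \<Longrightarrow> openin X V \<Longrightarrow> U \<subseteq> V \<Longrightarrow> V \<in> P"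
  unfolding cp_filter_def by blast
lemma cp_prime: "cp_filter X P \<Longrightarrow> \<U> \<subseteq> {U. openin X U} \<Longrightarrow> \<Union>\<U> \<in> P \<Longrightarrow> \<exists>U\<in>\<U>. U \<in> P"
  unfolding cp_filter_def by blast

lemma cp_int_iff: "cp_filter X P \<Longrightarrow> openin X U \<Longrightarrow> openin X V \<Longrightarrow> (U \<inter> V \<in> P \<longleftrightarrow> U \<in> P \<and> V \<in> P)"
  by (meson cp_int cp_up inf_le1 inf_le2)

lemma cp_Union_iff: "cp_filter X P \<Longrightarrow> \<U> \<subseteq> {U. openin X U} \<Longrightarrow> (\<Union>\<U> \<in> P \<longleftrightarrow> (\<exists>U\<in>\<U>. U \<in> P))"
proof
  assume "cp_filter X P" "\<U> \<subseteq> {U. openin X U}" "\<Union>\<U> \<in> P" then show "\<exists>U\<in>\<U>. U \<in> P" by (rule cp_prime)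
next
  assume a: "cp_filter X P" "\<U> \<subseteq> {U. openin X U}" "\<exists>U\<in>\<U>. U \<in> P"
  then obtain U where "U \<in> \<U>" "U \<in> P" by blast
  moreover have "openin X (\<Union>\<U>)" using a(2) by (intro openin_Union) blast
  ultimately show "\<Union>\<U> \<in> P" using cp_up[OF a(1)] by (meson Sup_upper)
qed

lemma istop_sob: "istopology (\<lambda>W. \<exists>U. openin X U \<and> W = {P \<in> sob_pts X. U \<in> P})"
  unfolding istopology_def
proof (intro conjI allI impI)
  fix S T
  assume "\<exists>U. openin X U \<and> S = {P \<in> sob_pts X. U \<in> P}" "\<exists>U. openin X U \<and> T = {P \<in> sob_pts X. U \<in> P}"
  then obtain U V where UV: "openin X U" "S = {P \<in> sob_pts X. U \<in> P}" "openin X V" "T = {P \<in> sob_pts X. V \<in> P}"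
    by blast
  have "S \<inter> T = {P \<in> sob_pts X. U \<inter> V \<in> P}"
    using UV cp_int_iff unfolding sob_pts_def by auto
  moreover have "openin X (U \<inter> V)" using UV by blast
  ultimately show "\<exists>U. openin X U \<and> S \<inter> T = {P \<in> sob_pts X. U \<in> P}" by blast
next
  fix K
  assume K: "\<forall>W\<in>K. \<exists>U. openin X U \<and> W = {P \<in> sob_pts X. U \<in> P}"
  define \<U> where "\<U> = {U. openin X U \<and> {P \<in> sob_pts X. U \<in> P} \<in> K}"
  have U: "\<U> \<subseteq> {U. openin X U}" unfolding \<U>_def by blast
  have "\<Union>K = {P \<in> sob_pts X. \<Union>\<U> \<in> P}"
  proof (rule set_eqI)
    fix P
    show "P \<in> \<Union>K \<longleftrightarrow> P \<in> {P \<in> sob_pts X. \<Union>\<U> \<in> P}"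
    proof
      assume "P \<in> \<Union>K"
      then obtain W where W: "W \<in> K" "P \<in> W" by blast
      then obtain U where "openin X U" "W = {P \<in> sob_pts X. U \<in> P}" using K by blast
      then show "P \<in> {P \<in> sob_pts X. \<Union>\<U> \<in> P}"
        using W cp_Union_iff[OF _ U, of P] unfolding \<U>_def sob_pts_def by auto
    next
      assume "P \<in> {P \<in> sob_pts X. \<Union>\<U> \<in> P}"
      then obtain U where "U \<in> \<U>" "U \<in> P" "P \<in> sob_pts X"
        using cp_Union_iff[OF _ U, of P] unfolding sob_pts_def by auto
      then show "P \<in> \<Union>K" unfolding \<U>_def by blast
    qed
  qed
  moreover have "openin X (\<Union>\<U>)" using U by (intro openin_Union) blast
  ultimately show "\<exists>U. openin X U \<and> \<Union>K = {P \<in> sob_pts X. U \<in> P}" by blast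
qed

lemma openin_sob: "openin (sob_top X) W \<longleftrightarrow> (\<exists>U. openin X U \<and> W = {P \<in> sob_pts X. U \<in> P})"
  unfolding sob_top_def topology_inverse'[OF istop_sob] by (rule refl)

lemma topspace_sob: "topspace (sob_top X) = sob_pts X"
proof -
  have "{P \<in> sob_pts X. topspace X \<in> P} = sob_pts X"
    unfolding sob_pts_def using cp_top by blast
  hence "openin (sob_top X) (sob_pts X)" using openin_sob by (metis openin_topspace)
  moreover have "\<And>W. openin (sob_top X) W \<Longrightarrow> W \<subseteq> sob_pts X" using openin_sob by blast
  ultimately show ?thesis unfolding topspace_def by blast
qed

lemma frame_homD:
  assumes "frame_hom X Y \<phi>"
  shows "openin Y V \<Longrightarrow> openin X (\<phi> V)" "\<phi> (topspace Y) = topspace X"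
    "openin Y U \<Longrightarrow> openin Y V \<Longrightarrow> \<phi> (U \<inter> V) = \<phi> U \<inter> \<phi> V"
    "(\<And>U. U \<in> \<U> \<Longrightarrow> openin Y U) \<Longrightarrow> \<phi> (\<Union>\<U>) = \<Union>(\<phi> ` \<U>)"
proof -
  note d = assms[unfolded frame_hom_def]
  show "openin Y V \<Longrightarrow> openin X (\<phi> V)" using d[THEN conjunct1] by blast
  show "\<phi> (topspace Y) = topspace X" using d[THEN conjunct2, THEN conjunct1] .
  show "openin Y U \<Longrightarrow> openin Y V \<Longrightarrow> \<phi> (U \<inter> V) = \<phi> U \<inter> \<phi> V"
    using d[THEN conjunct2, THEN conjunct2, THEN conjunct1] by blast
  show "(\<And>U. U \<in> \<U> \<Longrightarrow> openin Y U) \<Longrightarrow> \<phi> (\<Union>\<U>) = \<Union>(\<phi> ` \<U>)"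
    using d[THEN conjunct2, THEN conjunct2, THEN conjunct2, THEN spec[of _ \<U>]] by blast
qed

lemma frame_hom_sub: "frame_hom X Y \<phi> \<Longrightarrow> openin Y V \<Longrightarrow> \<phi> V \<subseteq> topspace X"
  using frame_homD(1) openin_subset by blast

lemma frame_hom_un: assumes "frame_hom X Y \<phi>" "openin Y U" "openin Y V"
  shows "\<phi> (U \<union> V) = \<phi> U \<union> \<phi> V"
  using frame_homD(4)[OF assms(1), of "{U,V}"] assms by auto

lemma frame_hom_mono: assumes "frame_hom X Y \<phi>" "openin Y U" "openin Y V" "U \<subseteq> V"
  shows "\<phi> U \<subseteq> \<phi> V"
  using frame_hom_un[OF assms(1-3)] assms(4) by (metis Un_absorb1 Un_upper1)

lemma frame_hom_empty: assumes "frame_hom X Y \<phi>" shows "\<phi> {} = {}"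
  using frame_homD(4)[OF assms, of "{}"] by simp

lemma pt_sober: assumes fh: "frame_hom X Y \<phi>" shows "pt X Y \<phi> \<in> sober_hom X Y"
proof -
  have pts: "pt X Y \<phi> x \<in> sob_pts Y" if x: "x \<in> topspace X" for x
  proof -
    have e: "pt X Y \<phi> x = {V. openin Y V \<and> x \<in> \<phi> V}" using x unfolding pt_def by simp
    have "cp_filter Y {V. openin Y V \<and> x \<in> \<phi> V}" unfolding cp_filter_def
    proof (intro conjI allI impI)
      show "{V. openin Y V \<and> x \<in> \<phi> V} \<subseteq> {U. openin Y U}" by blast
      show "topspace Y \<in> {V. openin Y V \<and> x \<in> \<phi> V}" using x frame_homD(2)[OF fh] by simp
    next
      fix U V assume "U \<in> {V. openin Y V \<and> x \<in> \<phi> V} \<and> V \<in> {V. openin Y V \<and> x \<in> \<phi> V}"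
      then show "U \<inter> V \<in> {V. openin Y V \<and> x \<in> \<phi> V}" using frame_homD(3)[OF fh] by auto
    next
      fix U V assume "U \<in> {V. openin Y V \<and> x \<in> \<phi> V} \<and> openin Y V \<and> U \<subseteq> V"
      then show "V \<in> {V. openin Y V \<and> x \<in> \<phi> V}" using frame_hom_mono[OF fh] by blast
    next
      fix \<U> assume a: "\<U> \<subseteq> {U. openin Y U} \<and> \<Union>\<U> \<in> {V. openin Y V \<and> x \<in> \<phi> V}"
      then have "x \<in> \<Union>(\<phi> ` \<U>)" using frame_homD(4)[OF fh, of \<U>] by auto
      then show "\<exists>U\<in>\<U>. U \<in> {V. openin Y V \<and> x \<in> \<phi> V}" using a by blast
    qed
    then show ?thesis unfolding sob_pts_def e by simp
  qed
  have cont: "continuous_map X (sob_top Y) (pt X Y \<phi>)"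
    unfolding continuous_map_def topspace_sob
  proof (intro conjI allI impI)
    show "pt X Y \<phi> \<in> topspace X \<rightarrow> sob_pts Y" using pts by blast
  next
    fix W assume "openin (sob_top Y) W"
    then obtain U where U: "openin Y U" "W = {P \<in> sob_pts Y. U \<in> P}" using openin_sob by blast
    have "{x \<in> topspace X. pt X Y \<phi> x \<in> W} = \<phi> U"
      using U pts frame_hom_sub[OF fh U(1)] unfolding pt_def by auto
    then show "openin X {x \<in> topspace X. pt X Y \<phi> x \<in> W}" using frame_homD(1)[OF fh U(1)] by simp
  qed
  show ?thesis unfolding sober_hom_def using cont by (simp add: pt_def)
qed

definition phi_of :: "'a topology \<Rightarrow> ('a \<Rightarrow> 'b set set) \<Rightarrow> 'b set \<Rightarrow> 'a set" where
  "phi_of X h V = {x \<in> topspace X. V \<in> h x}"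

lemma sober_hom_frame:
  assumes h: "h \<in> sober_hom X Y"
  shows "frame_hom X Y (phi_of X h)" "h = pt X Y (phi_of X h)"
proof -
  have cont: "continuous_map X (sob_top Y) h" and ext: "h \<in> extensional (topspace X)"
    using h unfolding sober_hom_def by auto
  have hp: "x \<in> topspace X \<Longrightarrow> cp_filter Y (h x)" for x
    using cont unfolding continuous_map_def topspace_sob sob_pts_def by blast
  show "frame_hom X Y (phi_of X h)"
    unfolding frame_hom_def
  proof (intro conjI allI impI)
    fix V assume V: "openin Y V"
    have "openin (sob_top Y) {P \<in> sob_pts Y. V \<in> P}" using V openin_sob by blast
    then have "openin X {x \<in> topspace X. h x \<in> {P \<in> sob_pts Y. V \<in> P}}"
      using cont unfolding continuous_map_def by blast
    moreover have "{x \<in> topspace X. h x \<in> {P \<in> sob_pts Y. V \<in> P}} = phi_of X h V"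
      unfolding phi_of_def using hp sob_pts_def by auto
    ultimately show "openin X (phi_of X h V)" by simp
  next
    show "phi_of X h (topspace Y) = topspace X" unfolding phi_of_def using hp cp_top by blast
  next
    fix U V assume "openin Y U" "openin Y V"
    then show "phi_of X h (U \<inter> V) = phi_of X h U \<inter> phi_of X h V"
      unfolding phi_of_def using hp cp_int_iff by blast
  next
    fix \<U> assume "\<forall>U\<in>\<U>. openin Y U"
    then have "\<U> \<subseteq> {U. openin Y U}" by blast
    then show "phi_of X h (\<Union>\<U>) = \<Union>(phi_of X h ` \<U>)"
      unfolding phi_of_def using hp cp_Union_iff by blast
  qed
  show "h = pt X Y (phi_of X h)"
  proof
    fix x show "h x = pt X Y (phi_of X h) x"
    proof (cases "x \<in> topspace X")
      case True then show ?thesis unfolding pt_def phi_of_def using hp[OF True] cp_sub by auto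
    next
      case False then show ?thesis using ext unfolding pt_def extensional_def by auto
    qed
  qed
qed

lemma pt_cong: "(\<And>V. openin Y V \<Longrightarrow> \<phi> V = \<psi> V) \<Longrightarrow> pt X Y \<phi> = pt X Y \<psi>"
  unfolding pt_def by (intro restrict_ext) auto

lemma pt_inj: assumes "frame_hom X Y \<phi>" "frame_hom X Y \<psi>" "pt X Y \<phi> = pt X Y \<psi>" "openin Y V"
  shows "\<phi> V = \<psi> V"
proof -
  have "x \<in> \<phi> V \<longleftrightarrow> x \<in> \<psi> V" if "x \<in> topspace X" for x
    using fun_cong[OF assms(3), of x] that assms(4) unfolding pt_def by auto
  then show ?thesis using frame_hom_sub[OF assms(1,4)] frame_hom_sub[OF assms(2,4)] by blast
qed

lemma sober_id_pt: "sober_id X = pt X X (\<lambda>V. V)"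
  unfolding sober_id_def pt_def lam_def by simp

lemma frame_hom_id: "frame_hom X X (\<lambda>V. V)"
  unfolding frame_hom_def by auto

lemma frame_hom_comp: assumes a: "frame_hom X Y \<phi>" and b: "frame_hom Y Z \<psi>"
  shows "frame_hom X Z (\<phi> \<circ> \<psi>)"
  unfolding frame_hom_def comp_def
proof (intro conjI allI impI)
  fix V assume "openin Z V" then show "openin X (\<phi> (\<psi> V))" using frame_homD(1)[OF a] frame_homD(1)[OF b] by blast
next
  show "\<phi> (\<psi> (topspace Z)) = topspace X" using frame_homD(2)[OF a] frame_homD(2)[OF b] by simp
next
  fix U V assume "openin Z U" "openin Z V"
  then show "\<phi> (\<psi> (U \<inter> V)) = \<phi> (\<psi> U) \<inter> \<phi> (\<psi> V)"
    using frame_homD(1,3)[OF a] frame_homD(1,3)[OF b] by simp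
next
  fix \<U> assume u: "\<forall>U\<in>\<U>. openin Z U"
  have 1: "\<psi> (\<Union>\<U>) = \<Union>(\<psi> ` \<U>)" using u frame_homD(4)[OF b] by blast
  have "\<phi> (\<Union>(\<psi> ` \<U>)) = \<Union>(\<phi> ` \<psi> ` \<U>)" using u frame_homD(1)[OF b] frame_homD(4)[OF a, of "\<psi> ` \<U>"] by blast
  then show "\<phi> (\<psi> (\<Union>\<U>)) = \<Union>((\<lambda>x. \<phi> (\<psi> x)) ` \<U>)" using 1 by (simp add: image_image)
qed

lemma sober_comp_pt:
  assumes fp: "frame_hom X Y \<phi>" and fs: "frame_hom Y Z \<psi>"
  shows "sober_comp X Y Z (pt Y Z \<psi>) (pt X Y \<phi>) = pt X Z (\<phi> \<circ> \<psi>)"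
proof
  fix x
  show "sober_comp X Y Z (pt Y Z \<psi>) (pt X Y \<phi>) x = pt X Z (\<phi> \<circ> \<psi>) x"
  proof (cases "x \<in> topspace X")
    case False then show ?thesis unfolding sober_comp_def pt_def by simp
  next
    case x: True
    define Q where "Q = {U. openin Z U \<and> x \<in> \<phi> (\<psi> U)}"
    have "pt X Z (\<phi> \<circ> \<psi>) \<in> topspace X \<rightarrow> sob_pts Z"
      using pt_sober[OF frame_hom_comp[OF fp fs]]
      unfolding sober_hom_def continuous_map_def topspace_sob by blast
    then have "pt X Z (\<phi> \<circ> \<psi>) x \<in> sob_pts Z" using x by blast
    moreover have ptQ: "pt X Z (\<phi> \<circ> \<psi>) x = Q" unfolding pt_def Q_def using x by simp
    ultimately have Qpt: "Q \<in> sob_pts Z" by simp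
    have pxY: "pt X Y \<phi> x = {V. openin Y V \<and> x \<in> \<phi> V}" unfolding pt_def using x by simp
    have pre: "{y \<in> topspace Y. pt Y Z \<psi> y \<in> {P \<in> sob_pts Z. U \<in> P}} = \<psi> U" if U: "openin Z U" for U
    proof -
      have "pt Y Z \<psi> y \<in> sob_pts Z" if "y \<in> topspace Y" for y
        using pt_sober[OF fs] that unfolding sober_hom_def continuous_map_def topspace_sob by blast
      then show ?thesis using frame_hom_sub[OF fs U] U unfolding pt_def by auto
    qed
    have sm: "s_map Y (sob_top Z) (pt Y Z \<psi>) (pt X Y \<phi> x) = lam (sob_top Z) Q"
    proof (rule set_eqI)
      fix W
      show "W \<in> s_map Y (sob_top Z) (pt Y Z \<psi>) (pt X Y \<phi> x) \<longleftrightarrow> W \<in> lam (sob_top Z) Q"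
      proof
        assume "W \<in> s_map Y (sob_top Z) (pt Y Z \<psi>) (pt X Y \<phi> x)"
        then have W: "openin (sob_top Z) W" "{y \<in> topspace Y. pt Y Z \<psi> y \<in> W} \<in> pt X Y \<phi> x"
          unfolding s_map_def by auto
        then obtain U where U: "openin Z U" "W = {P \<in> sob_pts Z. U \<in> P}" using openin_sob by blast
        have "x \<in> \<phi> (\<psi> U)" using W(2) pre[OF U(1)] U(2) pxY by auto
        then show "W \<in> lam (sob_top Z) Q" unfolding lam_def using W(1) U Qpt Q_def by auto
      next
        assume "W \<in> lam (sob_top Z) Q"
        then have W: "openin (sob_top Z) W" "Q \<in> W" unfolding lam_def by auto
        then obtain U where U: "openin Z U" "W = {P \<in> sob_pts Z. U \<in> P}" using openin_sob by blast
        have "x \<in> \<phi> (\<psi> U)" using W(2) U(2) Q_def by auto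
        then have "{y \<in> topspace Y. pt Y Z \<psi> y \<in> W} \<in> pt X Y \<phi> x"
          using pre[OF U(1)] U(2) pxY frame_homD(1)[OF fs U(1)] by auto
        then show "W \<in> s_map Y (sob_top Z) (pt Y Z \<psi>) (pt X Y \<phi> x)" unfolding s_map_def using W(1) by auto
      qed
    qed
    have inj: "inj_on (lam (sob_top Z)) (topspace (sob_top Z))"
    proof (rule inj_onI)
      fix P P' assume P: "P \<in> topspace (sob_top Z)" "P' \<in> topspace (sob_top Z)" and eq: "lam (sob_top Z) P = lam (sob_top Z) P'"
      have "U \<in> P \<longleftrightarrow> U \<in> P'" if U: "openin Z U" for U
      proof -
        have o: "openin (sob_top Z) {R \<in> sob_pts Z. U \<in> R}" using openin_sob U by blast
        have "{R \<in> sob_pts Z. U \<in> R} \<in> lam (sob_top Z) P \<longleftrightarrow> {R \<in> sob_pts Z. U \<in> R} \<in> lam (sob_top Z) P'"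
          using eq by simp
        then have "P \<in> {R \<in> sob_pts Z. U \<in> R} \<longleftrightarrow> P' \<in> {R \<in> sob_pts Z. U \<in> R}"
          using o unfolding lam_def by simp
        then show ?thesis using P topspace_sob by auto
      qed
      moreover have "cp_filter Z P" "cp_filter Z P'" using P unfolding topspace_sob sob_pts_def by auto
      ultimately show "P = P'" using cp_sub by blast
    qed
    have "sober_comp X Y Z (pt Y Z \<psi>) (pt X Y \<phi>) x = inv_into (topspace (sob_top Z)) (lam (sob_top Z)) (lam (sob_top Z) Q)"
      unfolding sober_comp_def using x sm by simp
    also have "\<dots> = Q" using inv_into_f_f[OF inj] Qpt topspace_sob by metis
    finally show ?thesis using ptQ by simp
  qed
qed


definition Fext :: "'b topology \<Rightarrow> ('b set \<Rightarrow> 'a set) \<Rightarrow> 'b set \<Rightarrow> 'a set" where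
  "Fext Y \<phi> S = \<Union>{\<phi> U - \<phi> V | U V. openin Y U \<and> openin Y V \<and> U - V \<subseteq> S}"

context
  fixes X :: "'a topology" and Y :: "'b topology" and \<phi>
  assumes fh: "frame_hom X Y \<phi>"
begin

lemma F_mono: "S \<subseteq> T \<Longrightarrow> Fext Y \<phi> S \<subseteq> Fext Y \<phi> T"
  unfolding Fext_def by blast

lemma F_sub: "Fext Y \<phi> S \<subseteq> topspace X"
  unfolding Fext_def using frame_hom_sub[OF fh] by blast

lemma F_lc: assumes U: "openin Y U" and V: "openin Y V"
  shows "Fext Y \<phi> (U - V) = \<phi> U - \<phi> V"
proof
  show "\<phi> U - \<phi> V \<subseteq> Fext Y \<phi> (U - V)" unfolding Fext_def using U V by blast
  show "Fext Y \<phi> (U - V) \<subseteq> \<phi> U - \<phi> V"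
  proof
    fix y assume "y \<in> Fext Y \<phi> (U - V)"
    then obtain U' V' where UV: "openin Y U'" "openin Y V'" "U' - V' \<subseteq> U - V" "y \<in> \<phi> U' - \<phi> V'"
      unfolding Fext_def by blast
    have "U' \<subseteq> U \<union> V'" using UV(3) by blast
    then have "\<phi> U' \<subseteq> \<phi> U \<union> \<phi> V'"
      using frame_hom_mono[OF fh UV(1)] frame_hom_un[OF fh U UV(2)] U UV(2) by blast
    moreover have "U' \<inter> V \<subseteq> V'" using UV(3) by blast
    then have "\<phi> U' \<inter> \<phi> V \<subseteq> \<phi> V'"
      using frame_hom_mono[OF fh _ UV(2)] frame_homD(3)[OF fh UV(1) V] UV(1) V by (metis openin_Int)
    ultimately show "y \<in> \<phi> U - \<phi> V" using UV(4) by blast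
  qed
qed

lemma F_open: assumes U: "openin Y U" shows "Fext Y \<phi> U = \<phi> U"
  using F_lc[OF U openin_empty] frame_hom_empty[OF fh] by simp

lemma F_Int: "Fext Y \<phi> (S \<inter> T) = Fext Y \<phi> S \<inter> Fext Y \<phi> T"
proof
  show "Fext Y \<phi> (S \<inter> T) \<subseteq> Fext Y \<phi> S \<inter> Fext Y \<phi> T" using F_mono by blast
  show "Fext Y \<phi> S \<inter> Fext Y \<phi> T \<subseteq> Fext Y \<phi> (S \<inter> T)"
  proof
    fix y assume "y \<in> Fext Y \<phi> S \<inter> Fext Y \<phi> T"
    then obtain U1 V1 U2 V2 where a: "openin Y U1" "openin Y V1" "U1 - V1 \<subseteq> S" "y \<in> \<phi> U1 - \<phi> V1"
      "openin Y U2" "openin Y V2" "U2 - V2 \<subseteq> T" "y \<in> \<phi> U2 - \<phi> V2"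
      unfolding Fext_def by blast
    have o: "openin Y (U1 \<inter> U2)" "openin Y (V1 \<union> V2)" using a by auto
    have "y \<in> \<phi> (U1 \<inter> U2) - \<phi> (V1 \<union> V2)"
      using a frame_homD(3)[OF fh a(1) a(5)] frame_hom_un[OF fh a(2) a(6)] by blast
    moreover have "(U1 \<inter> U2) - (V1 \<union> V2) \<subseteq> S \<inter> T" using a by blast
    ultimately show "y \<in> Fext Y \<phi> (S \<inter> T)" unfolding Fext_def using o by blast
  qed
qed

lemma fin_inter: assumes "finite K" "\<forall>k\<in>K. openin Y (w k)" "openin Y U"
  shows "openin Y (U \<inter> \<Inter>(w ` K)) \<and> \<phi> (U \<inter> \<Inter>(w ` K)) = \<phi> U \<inter> \<Inter>((\<phi> \<circ> w) ` K)"
  using assms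
proof (induction K rule: finite_induct)
  case empty then show ?case by simp
next
  case (insert k K)
  have e: "U \<inter> \<Inter>(w ` insert k K) = (U \<inter> \<Inter>(w ` K)) \<inter> w k" by auto
  have o: "openin Y (U \<inter> \<Inter>(w ` K))" using insert by blast
  have "\<phi> ((U \<inter> \<Inter>(w ` K)) \<inter> w k) = \<phi> (U \<inter> \<Inter>(w ` K)) \<inter> \<phi> (w k)"
    using frame_homD(3)[OF fh o] insert.prems by blast
  then show ?case using e o insert by auto
qed

lemma F_cover:
  assumes fin: "finite S" and op: "\<forall>s\<in>S. openin Y (u s) \<and> openin Y (v s)"
    and U: "openin Y U" and V: "openin Y V"
    and cov: "U - V \<subseteq> (\<Union>s\<in>S. u s - v s)" and y: "y \<in> \<phi> U - \<phi> V"
  shows "\<exists>s\<in>S. y \<in> \<phi> (u s) - \<phi> (v s)"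
proof (rule ccontr)
  assume no: "\<not> ?thesis"
  define S1 where "S1 = {s\<in>S. y \<in> \<phi> (v s)}"
  define S2 where "S2 = S - S1"
  define U' where "U' = U \<inter> \<Inter>(v ` S1)"
  define V' where "V' = \<Union>(insert V (u ` S2))"
  have f1: "finite S1" using fin unfolding S1_def by simp
  have I: "openin Y U' \<and> \<phi> U' = \<phi> U \<inter> \<Inter>((\<phi> \<circ> v) ` S1)"
    unfolding U'_def by (rule fin_inter[OF f1 _ U]) (use op S1_def in auto)
  have oV: "\<forall>W \<in> insert V (u ` S2). openin Y W" using op V S2_def by auto
  then have oV': "openin Y V'" unfolding V'_def by (intro openin_Union) auto
  have phV: "\<phi> V' = \<Union>(\<phi> ` insert V (u ` S2))" unfolding V'_def using oV frame_homD(4)[OF fh] by blast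
  have yU: "y \<in> \<phi> U'" using I y S1_def by auto
  have yV: "y \<notin> \<phi> V'" using phV y no S2_def S1_def by auto
  have "\<not> U' \<subseteq> V'" using frame_hom_mono[OF fh] I oV' yU yV by blast
  then obtain x where x: "x \<in> U'" "x \<notin> V'" by blast
  then have "x \<in> U - V" unfolding U'_def V'_def by auto
  then obtain s where s: "s \<in> S" "x \<in> u s - v s" using cov by blast
  show False
  proof (cases "s \<in> S1")
    case True then show False using x s unfolding U'_def by auto
  next
    case False then have "s \<in> S2" using s S2_def by blast
    then show False using x s unfolding V'_def by auto
  qed
qed

lemma F_union_lc:
  assumes fin: "finite S" and op: "\<forall>s\<in>S. openin Y (u s) \<and> openin Y (v s)"
  shows "Fext Y \<phi> (\<Union>s\<in>S. u s - v s) = (\<Union>s\<in>S. \<phi> (u s) - \<phi> (v s))"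
proof
  show "(\<Union>s\<in>S. \<phi> (u s) - \<phi> (v s)) \<subseteq> Fext Y \<phi> (\<Union>s\<in>S. u s - v s)"
  proof
    fix y assume "y \<in> (\<Union>s\<in>S. \<phi> (u s) - \<phi> (v s))"
    then obtain s where s: "s \<in> S" "y \<in> \<phi> (u s) - \<phi> (v s)" by blast
    then have "y \<in> Fext Y \<phi> (u s - v s)" using F_lc op by blast
    moreover have "u s - v s \<subseteq> (\<Union>s\<in>S. u s - v s)" using s by blast
    ultimately show "y \<in> Fext Y \<phi> (\<Union>s\<in>S. u s - v s)" using F_mono by blast
  qed
  show "Fext Y \<phi> (\<Union>s\<in>S. u s - v s) \<subseteq> (\<Union>s\<in>S. \<phi> (u s) - \<phi> (v s))"
  proof
    fix y assume "y \<in> Fext Y \<phi> (\<Union>s\<in>S. u s - v s)"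
    then obtain U V where a: "openin Y U" "openin Y V" "U - V \<subseteq> (\<Union>s\<in>S. u s - v s)" "y \<in> \<phi> U - \<phi> V"
      unfolding Fext_def by blast
    show "y \<in> (\<Union>s\<in>S. \<phi> (u s) - \<phi> (v s))" using F_cover[OF fin op a] by blast
  qed
qed

lemma F_P4: "Fext Y \<phi> S = \<Union>{Fext Y \<phi> (U - V) | U V. openin Y U \<and> openin Y V \<and> U - V \<subseteq> S}"
proof -
  have "{Fext Y \<phi> (U - V) | U V. openin Y U \<and> openin Y V \<and> U - V \<subseteq> S} =
        {\<phi> U - \<phi> V | U V. openin Y U \<and> openin Y V \<and> U - V \<subseteq> S}"
    using F_lc by metis
  then show ?thesis unfolding Fext_def by simp
qed

end


locale stdmt =
  fixes M :: "'b mt"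
  assumes std: "STDMT M"

sublocale stdmt \<subseteq> cb M
proof
  show "complete_boolean M"
    using std[unfolded STDMT_def MT_algebra_def, THEN conjunct1, THEN conjunct1] .
qed

context stdmt
begin

abbreviation "At \<equiv> mt_atoms M"
abbreviation "\<alpha> \<equiv> atoms_below M"
abbreviation "Op \<equiv> mt_opens M"

lemmas mtp = std[unfolded STDMT_def MT_algebra_def, THEN conjunct1, THEN conjunct2]

lemma box_in: "a \<in> C \<Longrightarrow> mt_box M a \<in> C"
  using mtp[THEN conjunct1] by blast
lemma box_top: "mt_box M (mt_top M) = mt_top M"
  using mtp[THEN conjunct2, THEN conjunct1] .
lemma box_meet: "a \<in> C \<Longrightarrow> b \<in> C \<Longrightarrow> mt_box M (mt_meet M a b) = mt_meet M (mt_box M a) (mt_box M b)"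
  using mtp[THEN conjunct2, THEN conjunct2, THEN conjunct1] by blast
lemma box_le: "a \<in> C \<Longrightarrow> mt_le M (mt_box M a) a"
  using mtp[THEN conjunct2, THEN conjunct2, THEN conjunct2, THEN conjunct1] by blast
lemma box_bb: "a \<in> C \<Longrightarrow> mt_le M (mt_box M a) (mt_box M (mt_box M a))"
  using mtp[THEN conjunct2, THEN conjunct2, THEN conjunct2, THEN conjunct2] by blast
lemma TDa: "a \<in> C \<Longrightarrow> \<exists>S. S \<subseteq> mt_lc M \<and> a = mt_Join M S"
  using std[unfolded STDMT_def TD_algebra_def, THEN conjunct2, THEN conjunct1] by blast
lemma spat: "inj_on \<alpha> C"
  using std[unfolded STDMT_def spatial_def, THEN conjunct2, THEN conjunct2] .

lemma alpha_mem: "x \<in> \<alpha> a \<longleftrightarrow> x \<in> At \<and> mt_le M x a"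
  unfolding atoms_below_def by blast
lemma alpha_sub: "\<alpha> a \<subseteq> At"
  unfolding atoms_below_def by blast
lemma alpha_mono: "a \<in> C \<Longrightarrow> b \<in> C \<Longrightarrow> mt_le M a b \<Longrightarrow> \<alpha> a \<subseteq> \<alpha> b"
  unfolding atoms_below_def using le_trans atom_in by blast
lemma alpha_meet: assumes a: "a \<in> C" and b: "b \<in> C" shows "\<alpha> (mt_meet M a b) = \<alpha> a \<inter> \<alpha> b"
proof (rule set_eqI)
  fix x
  show "x \<in> \<alpha> (mt_meet M a b) \<longleftrightarrow> x \<in> \<alpha> a \<inter> \<alpha> b"
  proof (cases "x \<in> At")
    case True
    then have xC: "x \<in> C" by (rule atom_in)
    have "mt_le M x (mt_meet M a b) \<longleftrightarrow> mt_le M x a \<and> mt_le M x b"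
    proof
      assume "mt_le M x (mt_meet M a b)"
      then show "mt_le M x a \<and> mt_le M x b"
        using le_trans[OF xC meet_in[OF a b] a] le_trans[OF xC meet_in[OF a b] b] meet_le1[OF a b] meet_le2[OF a b] by blast
    next
      assume "mt_le M x a \<and> mt_le M x b" then show "mt_le M x (mt_meet M a b)" using meet_greatest[OF a b xC] by blast
    qed
    then show ?thesis using True alpha_mem by auto
  next
    case False then show ?thesis using alpha_mem by auto
  qed
qed
lemma alpha_inj: "a \<in> C \<Longrightarrow> b \<in> C \<Longrightarrow> \<alpha> a = \<alpha> b \<Longrightarrow> a = b"
  using spat inj_onD by metis
lemma alpha_le_iff: assumes "a \<in> C" "b \<in> C" shows "mt_le M a b \<longleftrightarrow> \<alpha> a \<subseteq> \<alpha> b"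
proof
  assume "\<alpha> a \<subseteq> \<alpha> b"
  then have "\<alpha> (mt_meet M a b) = \<alpha> a" using alpha_meet[OF assms] by blast
  then have "mt_meet M a b = a" using alpha_inj[OF meet_in[OF assms] assms(1)] by blast
  then show "mt_le M a b" using le_iff_meet[OF assms] by blast
next
  show "mt_le M a b \<Longrightarrow> \<alpha> a \<subseteq> \<alpha> b" using alpha_mono[OF assms] .
qed

lemma alpha_Join: assumes S: "S \<subseteq> C" shows "\<alpha> (mt_Join M S) = \<Union>(\<alpha> ` S)"
proof
  have "\<alpha> s \<subseteq> \<alpha> (mt_Join M S)" if "s \<in> S" for s
    using alpha_mono[OF _ Join_in[OF S] Join_upper[OF S that]] that S by blast
  then show "\<Union>(\<alpha> ` S) \<subseteq> \<alpha> (mt_Join M S)" by blast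
  show "\<alpha> (mt_Join M S) \<subseteq> \<Union>(\<alpha> ` S)"
  proof
    fix x assume "x \<in> \<alpha> (mt_Join M S)"
    then have "x \<in> At" "mt_le M x (mt_Join M S)" using alpha_mem by auto
    then obtain s where "s \<in> S" "mt_le M x s" using atom_prime[OF _ S] by blast
    then show "x \<in> \<Union>(\<alpha> ` S)" using \<open>x \<in> At\<close> alpha_mem by blast
  qed
qed

lemma alpha_atom: assumes x: "x \<in> At" shows "\<alpha> x = {x}"
proof -
  have "y = x" if "y \<in> At" "mt_le M y x" for y
    using that x unfolding mt_atoms_def by blast
  then show ?thesis using x le_refl atom_in unfolding atoms_below_def by blast
qed

lemma alpha_JoinA: assumes X: "X \<subseteq> At" shows "mt_Join M X \<in> C" "\<alpha> (mt_Join M X) = X"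
proof -
  have XC: "X \<subseteq> C" using X atom_in by blast
  show "mt_Join M X \<in> C" using Join_in XC by blast
  have "\<alpha> ` X = (\<lambda>x. {x}) ` X" using alpha_atom X by auto
  then show "\<alpha> (mt_Join M X) = X" using alpha_Join[OF XC] by auto
qed

lemma alpha_top: "\<alpha> (mt_top M) = At"
  using alpha_sub le_top atom_in unfolding atoms_below_def by blast

lemma alpha_bot: "\<alpha> (mt_bot M) = {}"
proof -
  have "x \<notin> \<alpha> (mt_bot M)" for x
  proof
    assume "x \<in> \<alpha> (mt_bot M)"
    then have "x \<in> At" "mt_le M x (mt_bot M)" using alpha_mem by auto
    then have "x = mt_bot M" using le_antisym bot_le bot_in atom_in by blast
    then show False using \<open>x \<in> At\<close> unfolding mt_atoms_def by blast
  qed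
  then show ?thesis by blast
qed

lemma alpha_join: "a \<in> C \<Longrightarrow> b \<in> C \<Longrightarrow> \<alpha> (mt_join M a b) = \<alpha> a \<union> \<alpha> b"
  unfolding mt_join_def using alpha_Join[of "{a,b}"] by simp

lemma alpha_neg: assumes a: "a \<in> C" shows "\<alpha> (mt_neg M a) = At - \<alpha> a"
proof -
  have "\<alpha> a \<union> \<alpha> (mt_neg M a) = At" using alpha_join[OF a neg_in[OF a]] neg_join[OF a] alpha_top by simp
  moreover have "\<alpha> a \<inter> \<alpha> (mt_neg M a) = {}" using alpha_meet[OF a neg_in[OF a]] neg_meet[OF a] alpha_bot by simp
  ultimately show ?thesis by blast
qed

lemma alpha_surj: "X \<subseteq> At \<Longrightarrow> \<exists>a\<in>C. \<alpha> a = X"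
  using alpha_JoinA by blast

lemma box_mono: assumes "a \<in> C" "b \<in> C" "mt_le M a b" shows "mt_le M (mt_box M a) (mt_box M b)"
proof -
  have "mt_meet M a b = a" using meet_absorb assms by blast
  then have "mt_box M a = mt_meet M (mt_box M a) (mt_box M b)" using box_meet assms by metis
  then show ?thesis using meet_le2 box_in assms by metis
qed

lemma box_idem: "a \<in> C \<Longrightarrow> mt_box M (mt_box M a) = mt_box M a"
  using le_antisym box_in box_le box_bb by metis

lemma opens_iff: "u \<in> Op \<longleftrightarrow> u \<in> C \<and> mt_box M u = u"
  unfolding mt_opens_def by blast
lemma Op_sub: "Op \<subseteq> C" unfolding mt_opens_def by blast
lemma box_open: "a \<in> C \<Longrightarrow> mt_box M a \<in> Op"
  using opens_iff box_in box_idem by blast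
lemma top_open: "mt_top M \<in> Op" using opens_iff box_top top_in by blast
lemma meet_open: "u \<in> Op \<Longrightarrow> v \<in> Op \<Longrightarrow> mt_meet M u v \<in> Op"
  using opens_iff box_meet meet_in by metis
lemma Join_open: assumes S: "S \<subseteq> Op" shows "mt_Join M S \<in> Op"
proof -
  have SC: "S \<subseteq> C" using S Op_sub by blast
  have J: "mt_Join M S \<in> C" using Join_in SC by blast
  have "mt_le M s (mt_box M (mt_Join M S))" if "s \<in> S" for s
    using box_mono[of s "mt_Join M S"] that S SC J Join_upper opens_iff by (metis subsetD)
  then have "mt_le M (mt_Join M S) (mt_box M (mt_Join M S))" using Join_least SC J box_in by blast
  then show ?thesis using le_antisym box_le J box_in opens_iff by metis
qed

lemma alpha_open_eq: "a \<in> C \<Longrightarrow> u \<in> Op \<Longrightarrow> \<alpha> a = \<alpha> u \<Longrightarrow> a = u"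
  using alpha_inj Op_sub by blast

lemma istop_at: "istopology (\<lambda>W. \<exists>u\<in>Op. W = \<alpha> u)"
  unfolding istopology_def
proof (intro conjI allI impI)
  fix S T assume "\<exists>u\<in>Op. S = \<alpha> u" "\<exists>u\<in>Op. T = \<alpha> u"
  then obtain u v where "u \<in> Op" "v \<in> Op" "S = \<alpha> u" "T = \<alpha> v" by blast
  moreover have "u \<in> C" "v \<in> C" using \<open>u \<in> Op\<close> \<open>v \<in> Op\<close> Op_sub by auto
  ultimately have "S \<inter> T = \<alpha> (mt_meet M u v)" "mt_meet M u v \<in> Op"
    using alpha_meet meet_open by auto
  then show "\<exists>u\<in>Op. S \<inter> T = \<alpha> u" by blast
next
  fix K assume K: "\<forall>W\<in>K. \<exists>u\<in>Op. W = \<alpha> u"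
  define S where "S = {u\<in>Op. \<alpha> u \<in> K}"
  have "\<Union>K = \<Union>(\<alpha> ` S)"
  proof
    show "\<Union>(\<alpha> ` S) \<subseteq> \<Union>K" unfolding S_def by auto
    show "\<Union>K \<subseteq> \<Union>(\<alpha> ` S)"
    proof
      fix x assume "x \<in> \<Union>K"
      then obtain W where W: "W \<in> K" "x \<in> W" by blast
      then obtain u where "u \<in> Op" "W = \<alpha> u" using K by blast
      then have "u \<in> S" "x \<in> \<alpha> u" unfolding S_def using W by auto
      then show "x \<in> \<Union>(\<alpha> ` S)" by blast
    qed
  qed
  have SO: "S \<subseteq> Op" unfolding S_def by blast
  then have "S \<subseteq> C" using Op_sub by blast
  then have "\<Union>(\<alpha> ` S) = \<alpha> (mt_Join M S)" using alpha_Join by simp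
  then show "\<exists>u\<in>Op. \<Union>K = \<alpha> u" using Join_open[OF SO] \<open>\<Union>K = \<Union>(\<alpha> ` S)\<close> by auto
qed

lemma openin_at: "openin (at_space M) W \<longleftrightarrow> (\<exists>u\<in>Op. W = \<alpha> u)"
  unfolding at_space_def topology_inverse'[OF istop_at] by (rule refl)

lemma topspace_at: "topspace (at_space M) = At"
proof -
  have "openin (at_space M) At" unfolding openin_at using top_open alpha_top by force
  moreover have "\<And>W. openin (at_space M) W \<Longrightarrow> W \<subseteq> At" using openin_at alpha_sub by blast
  ultimately show ?thesis unfolding topspace_def by blast
qed

lemma lc_sub: "mt_lc M \<subseteq> C" unfolding mt_lc_def by blast

lemma lc_char: "a \<in> mt_lc M \<longleftrightarrow> a \<in> C \<and> (\<exists>u\<in>Op. \<exists>v\<in>Op. \<alpha> a = \<alpha> u - \<alpha> v)"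
proof
  assume "a \<in> mt_lc M"
  then obtain b c where bc: "a \<in> C" "b \<in> C" "c \<in> C" "a = mt_meet M (mt_box M b) (mt_dia M c)"
    unfolding mt_lc_def by blast
  have nc: "mt_neg M c \<in> C" using neg_in bc by blast
  have d: "mt_dia M c = mt_neg M (mt_box M (mt_neg M c))" unfolding mt_dia_def ..
  have "\<alpha> a = \<alpha> (mt_box M b) \<inter> \<alpha> (mt_dia M c)"
    using bc(4) alpha_meet[OF box_in[OF bc(2)]] d neg_in[OF box_in[OF nc]] by simp
  also have "\<alpha> (mt_dia M c) = At - \<alpha> (mt_box M (mt_neg M c))"
    using d alpha_neg[OF box_in[OF nc]] by simp
  finally have "\<alpha> a = \<alpha> (mt_box M b) \<inter> (At - \<alpha> (mt_box M (mt_neg M c)))" .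
  also have "\<dots> = \<alpha> (mt_box M b) - \<alpha> (mt_box M (mt_neg M c))" using alpha_sub by blast
  finally show "a \<in> C \<and> (\<exists>u\<in>Op. \<exists>v\<in>Op. \<alpha> a = \<alpha> u - \<alpha> v)"
    using bc box_open nc by blast
next
  assume "a \<in> C \<and> (\<exists>u\<in>Op. \<exists>v\<in>Op. \<alpha> a = \<alpha> u - \<alpha> v)"
  then obtain u v where uv: "a \<in> C" "u \<in> Op" "v \<in> Op" "\<alpha> a = \<alpha> u - \<alpha> v" by blast
  have uC: "u \<in> C" and vC: "v \<in> C" using uv Op_sub by auto
  have bu: "mt_box M u = u" and bv: "mt_box M v = v" using uv opens_iff by auto
  have "mt_dia M (mt_neg M v) = mt_neg M v"
    unfolding mt_dia_def using neg_neg[OF vC] bv by simp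
  then have e: "mt_meet M (mt_box M u) (mt_dia M (mt_neg M v)) = mt_meet M u (mt_neg M v)" using bu by simp
  have "\<alpha> (mt_meet M u (mt_neg M v)) = \<alpha> u \<inter> (At - \<alpha> v)"
    using alpha_meet[OF uC neg_in[OF vC]] alpha_neg[OF vC] by simp
  also have "\<dots> = \<alpha> a" using uv alpha_sub by blast
  finally have "a = mt_meet M u (mt_neg M v)"
    using alpha_inj[OF uv(1) meet_in[OF uC neg_in[OF vC]]] by simp
  then have "a = mt_meet M (mt_box M u) (mt_dia M (mt_neg M v))" using e by simp
  then show "a \<in> mt_lc M" unfolding mt_lc_def using uv(1) uC vC neg_in by blast
qed

lemma open_lc: assumes u: "u \<in> Op" shows "u \<in> mt_lc M"
proof -
  have "\<alpha> (mt_box M (mt_bot M)) \<subseteq> \<alpha> (mt_bot M)"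
    using alpha_mono[OF box_in[OF bot_in] bot_in box_le[OF bot_in]] .
  then have "\<alpha> u = \<alpha> u - \<alpha> (mt_box M (mt_bot M))" using alpha_bot by blast
  moreover have "u \<in> C" using u Op_sub by blast
  ultimately show ?thesis unfolding lc_char using u box_open[OF bot_in] by blast
qed

lemma atom_lc: assumes x: "x \<in> At" shows "x \<in> mt_lc M"
proof -
  obtain S where S: "S \<subseteq> mt_lc M" "x = mt_Join M S" using TDa atom_in x by blast
  have SC: "S \<subseteq> C" using S lc_sub by blast
  have "mt_le M x (mt_Join M S)" using le_refl[OF atom_in[OF x]] S(2) by simp
  then obtain s where s: "s \<in> S" "mt_le M x s" using atom_prime[OF x SC] by blast
  have "mt_le M s x" using Join_upper[OF SC s(1)] S(2) by simp
  then have "s = x" using le_antisym s SC atom_in x by blast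
  then show ?thesis using s S by blast
qed

lemma TD_at: "TD_space (at_space M)"
  unfolding TD_space_def topspace_at
proof
  fix x assume x: "x \<in> At"
  then obtain u v where uv: "u \<in> Op" "v \<in> Op" "\<alpha> x = \<alpha> u - \<alpha> v" using atom_lc lc_char by blast
  have ax: "\<alpha> x = {x}" using alpha_atom x by blast
  have ou: "openin (at_space M) (\<alpha> u)" using openin_at uv by blast
  have cl: "closedin (at_space M) (At - \<alpha> v)"
  proof -
    have "At - (At - \<alpha> v) = \<alpha> v" using alpha_sub by blast
    then show ?thesis unfolding closedin_def topspace_at openin_at using uv by auto
  qed
  have "{x} = (At - \<alpha> v) \<inter> \<alpha> u" using uv ax alpha_sub by blast
  then have "closedin (subtopology (at_space M) (\<alpha> u)) {x}"
    unfolding closedin_subtopology using cl by blast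
  then show "\<exists>U. openin (at_space M) U \<and> x \<in> U \<and> closedin (subtopology (at_space M) U) {x}"
    using ou uv ax by blast
qed

lemma Join_lc_below: assumes a: "a \<in> C" shows "mt_Join M {x \<in> mt_lc M. mt_le M x a} = a"
proof -
  let ?S = "{x \<in> mt_lc M. mt_le M x a}"
  have SC: "?S \<subseteq> C" using lc_sub by blast
  have "\<alpha> (mt_Join M ?S) = \<alpha> a"
  proof
    show "\<alpha> (mt_Join M ?S) \<subseteq> \<alpha> a" using alpha_Join[OF SC] alpha_mono SC a by blast
    show "\<alpha> a \<subseteq> \<alpha> (mt_Join M ?S)"
    proof
      fix y assume "y \<in> \<alpha> a"
      then have "y \<in> At" "mt_le M y a" using alpha_mem by auto
      then have "y \<in> ?S" "y \<in> \<alpha> y" using atom_lc alpha_atom by auto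
      then show "y \<in> \<alpha> (mt_Join M ?S)" using alpha_Join[OF SC] by blast
    qed
  qed
  then show ?thesis using alpha_inj Join_in SC a by blast
qed

lemma Join_max: "S \<subseteq> C \<Longrightarrow> m \<in> S \<Longrightarrow> (\<And>s. s \<in> S \<Longrightarrow> mt_le M s m) \<Longrightarrow> mt_Join M S = m"
  using le_antisym Join_in Join_upper Join_least by (meson subsetD)

end


lemma stdmt_cb: "stdmt M \<Longrightarrow> cb M"
  unfolding cb_def stdmt_def STDMT_def MT_algebra_def by (elim conjE)

lemma prox_parts:
  assumes "f \<in> prox_hom M N"
  shows "\<And>a. a \<in> mt_carrier M \<Longrightarrow> f a \<in> mt_carrier N"
    and "\<And>a. a \<in> mt_opens M \<Longrightarrow> f a \<in> mt_opens N"
    and "f (mt_top M) = mt_top N"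
    and "\<And>S. S \<subseteq> mt_opens M \<Longrightarrow> f (mt_Join M S) = mt_Join N (f ` S)"
    and "\<And>a b. a \<in> mt_carrier M \<Longrightarrow> b \<in> mt_carrier M \<Longrightarrow> f (mt_meet M a b) = mt_meet N (f a) (f b)"
    and "\<And>S. finite S \<Longrightarrow> S \<subseteq> mt_lc M \<Longrightarrow> f (mt_Join M S) = mt_Join N (f ` S)"
    and "\<And>a. a \<in> mt_carrier M \<Longrightarrow> f a = mt_Join N {f x | x. x \<in> mt_lc M \<and> mt_le M x a}"
    and "f \<in> extensional (mt_carrier M)"
proof -
  have p: "proximity M N f" and e: "f \<in> extensional (mt_carrier M)" using assms unfolding prox_hom_def by auto
  note q = p[unfolded proximity_def]
  show "\<And>a. a \<in> mt_carrier M \<Longrightarrow> f a \<in> mt_carrier N" using q[THEN conjunct1] by blast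
  show "\<And>a. a \<in> mt_opens M \<Longrightarrow> f a \<in> mt_opens N" using q[THEN conjunct2, THEN conjunct1] by blast
  show "f (mt_top M) = mt_top N" using q[THEN conjunct2, THEN conjunct2, THEN conjunct1] .
  show "\<And>S. S \<subseteq> mt_opens M \<Longrightarrow> f (mt_Join M S) = mt_Join N (f ` S)"
    using q[THEN conjunct2, THEN conjunct2, THEN conjunct2, THEN conjunct2, THEN conjunct1] by blast
  show "\<And>a b. a \<in> mt_carrier M \<Longrightarrow> b \<in> mt_carrier M \<Longrightarrow> f (mt_meet M a b) = mt_meet N (f a) (f b)"
    using q[THEN conjunct2, THEN conjunct2, THEN conjunct2, THEN conjunct2, THEN conjunct2, THEN conjunct1] by blast
  show "\<And>S. finite S \<Longrightarrow> S \<subseteq> mt_lc M \<Longrightarrow> f (mt_Join M S) = mt_Join N (f ` S)"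
    using q[THEN conjunct2, THEN conjunct2, THEN conjunct2, THEN conjunct2, THEN conjunct2, THEN conjunct2, THEN conjunct1] by blast
  show "\<And>a. a \<in> mt_carrier M \<Longrightarrow> f a = mt_Join N {f x | x. x \<in> mt_lc M \<and> mt_le M x a}"
    using q[THEN conjunct2, THEN conjunct2, THEN conjunct2, THEN conjunct2, THEN conjunct2, THEN conjunct2, THEN conjunct2] by blast
  show "f \<in> extensional (mt_carrier M)" by (rule e)
qed

context
  fixes M :: "'b mt" and N :: "'c mt"
  assumes sM: "stdmt M" and sN: "stdmt N"
begin

lemma pf_mono:
  assumes f: "f \<in> prox_hom M N" and a: "a \<in> mt_carrier M" and b: "b \<in> mt_carrier M" and le: "mt_le M a b"
  shows "mt_le N (f a) (f b)"
proof -
  have "mt_meet M a b = a" using cb.meet_absorb[OF stdmt_cb[OF sM] a b le] .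
  then have "f a = mt_meet N (f a) (f b)" using prox_parts(5)[OF f a b] by simp
  then show ?thesis using cb.meet_le2[OF stdmt_cb[OF sN] prox_parts(1)[OF f a] prox_parts(1)[OF f b]] by simp
qed

lemma pf_bot: assumes f: "f \<in> prox_hom M N" shows "f (mt_bot M) = mt_bot N"
  using prox_parts(4)[OF f, of "{}"] unfolding mt_bot_def by simp

lemma pf_neg_open:
  assumes f: "f \<in> prox_hom M N" and u: "u \<in> mt_opens M"
  shows "atoms_below N (f (mt_neg M u)) = mt_atoms N - atoms_below N (f u)"
proof -
  have cM: "cb M" and cN: "cb N" using sM sN stdmt_cb by auto
  have uC: "u \<in> mt_carrier M" using u stdmt.Op_sub[OF sM] by blast
  have nC: "mt_neg M u \<in> mt_carrier M" using cb.neg_in[OF cM uC] .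
  have ulc: "u \<in> mt_lc M" using stdmt.open_lc[OF sM u] .
  have "atoms_below M (mt_neg M u) = atoms_below M (mt_top M) - atoms_below M (mt_bot M) - atoms_below M u"
    using stdmt.alpha_neg[OF sM uC] stdmt.alpha_top[OF sM] stdmt.alpha_bot[OF sM] by simp
  have "atoms_below M (mt_neg M u) = atoms_below M (mt_top M) - atoms_below M u"
    using stdmt.alpha_neg[OF sM uC] stdmt.alpha_top[OF sM] by simp
  then have nlc: "mt_neg M u \<in> mt_lc M"
    unfolding stdmt.lc_char[OF sM] using nC stdmt.top_open[OF sM] u by blast
  have fu: "f u \<in> mt_carrier N" and fn: "f (mt_neg M u) \<in> mt_carrier N"
    using prox_parts(1)[OF f] uC nC by auto
  have "f (mt_Join M {u, mt_neg M u}) = mt_Join N {f u, f (mt_neg M u)}"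
    using prox_parts(6)[OF f, of "{u, mt_neg M u}"] ulc nlc by simp
  moreover have "mt_Join M {u, mt_neg M u} = mt_top M"
    using cb.neg_join[OF cM uC] unfolding mt_join_def .
  ultimately have "mt_join N (f u) (f (mt_neg M u)) = mt_top N"
    using prox_parts(3)[OF f] unfolding mt_join_def by simp
  then have 1: "atoms_below N (f u) \<union> atoms_below N (f (mt_neg M u)) = mt_atoms N"
    using stdmt.alpha_join[OF sN fu fn] stdmt.alpha_top[OF sN] by simp
  have "f (mt_meet M u (mt_neg M u)) = mt_meet N (f u) (f (mt_neg M u))"
    using prox_parts(5)[OF f uC nC] .
  then have "mt_meet N (f u) (f (mt_neg M u)) = mt_bot N"
    using cb.neg_meet[OF cM uC] pf_bot[OF f] by simp
  then have 2: "atoms_below N (f u) \<inter> atoms_below N (f (mt_neg M u)) = {}"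
    using stdmt.alpha_meet[OF sN fu fn] stdmt.alpha_bot[OF sN] by simp
  show ?thesis using 1 2 by blast
qed

lemma pf_lc:
  assumes f: "f \<in> prox_hom M N" and a: "a \<in> mt_carrier M" and u: "u \<in> mt_opens M" and v: "v \<in> mt_opens M"
    and e: "atoms_below M a = atoms_below M u - atoms_below M v"
  shows "atoms_below N (f a) = atoms_below N (f u) - atoms_below N (f v)"
proof -
  have cM: "cb M" using sM stdmt_cb by auto
  have uC: "u \<in> mt_carrier M" and vC: "v \<in> mt_carrier M" using u v stdmt.Op_sub[OF sM] by auto
  have nC: "mt_neg M v \<in> mt_carrier M" using cb.neg_in[OF cM vC] .
  have "atoms_below M (mt_meet M u (mt_neg M v)) = atoms_below M u \<inter> (mt_atoms M - atoms_below M v)"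
    using stdmt.alpha_meet[OF sM uC nC] stdmt.alpha_neg[OF sM vC] by simp
  also have "\<dots> = atoms_below M a" using e stdmt.alpha_sub[OF sM, of u] by blast
  finally have "a = mt_meet M u (mt_neg M v)"
    using stdmt.alpha_inj[OF sM a cb.meet_in[OF cM uC nC]] by simp
  then have "f a = mt_meet N (f u) (f (mt_neg M v))" using prox_parts(5)[OF f uC nC] by simp
  then have "atoms_below N (f a) = atoms_below N (f u) \<inter> (mt_atoms N - atoms_below N (f v))"
    using stdmt.alpha_meet[OF sN prox_parts(1)[OF f uC] prox_parts(1)[OF f nC]] pf_neg_open[OF f v] by simp
  then show ?thesis using stdmt.alpha_sub[OF sN, of "f u"] by blast
qed

lemma pf_determined:
  assumes f: "f \<in> prox_hom M N" and g: "g \<in> prox_hom M N" and eq: "\<And>u. u \<in> mt_opens M \<Longrightarrow> f u = g u"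
  shows "f = g"
proof
  fix a
  show "f a = g a"
  proof (cases "a \<in> mt_carrier M")
    case False then show ?thesis using prox_parts(8)[OF f] prox_parts(8)[OF g] unfolding extensional_def by auto
  next
    case True
    have lc: "f x = g x" if x: "x \<in> mt_lc M" for x
    proof -
      obtain u v where uv: "x \<in> mt_carrier M" "u \<in> mt_opens M" "v \<in> mt_opens M"
        "atoms_below M x = atoms_below M u - atoms_below M v"
        using x stdmt.lc_char[OF sM] by blast
      have "atoms_below N (f x) = atoms_below N (g x)"
        using pf_lc[OF f uv] pf_lc[OF g uv] eq uv by simp
      then show ?thesis using stdmt.alpha_inj[OF sN prox_parts(1)[OF f uv(1)] prox_parts(1)[OF g uv(1)]] by simp
    qed
    have "{f x | x. x \<in> mt_lc M \<and> mt_le M x a} = {g x | x. x \<in> mt_lc M \<and> mt_le M x a}"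
      using lc by metis
    then show ?thesis using prox_parts(7)[OF f True] prox_parts(7)[OF g True] by simp
  qed
qed

definition Phi :: "'b mt \<Rightarrow> 'c mt \<Rightarrow> ('b \<Rightarrow> 'c) \<Rightarrow> 'b set \<Rightarrow> 'c set" where
  "Phi M' N' f W = {y \<in> mt_atoms N'. \<exists>u\<in>mt_opens M'. W = atoms_below M' u \<and> mt_le N' y (f u)}"

lemma at_map_pt: "at_map M N f = pt (at_space N) (at_space M) (Phi M N f)"
proof
  fix y
  show "at_map M N f y = pt (at_space N) (at_space M) (Phi M N f) y"
    unfolding at_map_def pt_def Phi_def stdmt.topspace_at[OF sN] stdmt.openin_at[OF sM]
    by auto
qed

lemma Phi_open: assumes u: "u \<in> mt_opens M" and h: "h u \<in> mt_carrier N"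
  shows "Phi M N h (atoms_below M u) = atoms_below N (h u)"
proof -
  have "(\<exists>u'\<in>mt_opens M. atoms_below M u = atoms_below M u' \<and> mt_le N y (h u')) \<longleftrightarrow> mt_le N y (h u)" for y
    using stdmt.alpha_inj[OF sM] stdmt.Op_sub[OF sM] u by blast
  then show ?thesis unfolding Phi_def atoms_below_def by auto
qed

lemma opens_family: assumes K: "\<And>W. W \<in> K \<Longrightarrow> openin (at_space M) W"
  shows "\<exists>S\<subseteq>mt_opens M. K = atoms_below M ` S"
proof -
  define S where "S = {u\<in>mt_opens M. atoms_below M u \<in> K}"
  have "K = atoms_below M ` S"
  proof
    show "atoms_below M ` S \<subseteq> K" unfolding S_def by auto
    show "K \<subseteq> atoms_below M ` S"
    proof
      fix W assume "W \<in> K"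
      then obtain u where "u \<in> mt_opens M" "W = atoms_below M u" using K stdmt.openin_at[OF sM] by blast
      then show "W \<in> atoms_below M ` S" unfolding S_def using \<open>W \<in> K\<close> by blast
    qed
  qed
  moreover have "S \<subseteq> mt_opens M" unfolding S_def by blast
  ultimately show ?thesis by (intro exI[of _ S]) simp
qed

lemma Phi_frame: assumes f: "f \<in> prox_hom M N"
  shows "frame_hom (at_space N) (at_space M) (Phi M N f)"
  unfolding frame_hom_def
proof (intro conjI allI impI)
  fix V assume "openin (at_space M) V"
  then obtain u where u: "u \<in> mt_opens M" "V = atoms_below M u" using stdmt.openin_at[OF sM] by blast
  have "Phi M N f V = atoms_below N (f u)"
    using Phi_open[OF u(1)] prox_parts(1)[OF f] stdmt.Op_sub[OF sM] u by blast
  then show "openin (at_space N) (Phi M N f V)"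
    using stdmt.openin_at[OF sN] prox_parts(2)[OF f u(1)] by blast
next
  have "Phi M N f (atoms_below M (mt_top M)) = atoms_below N (f (mt_top M))"
    using Phi_open[OF stdmt.top_open[OF sM]] prox_parts(1)[OF f] cb.top_in[OF stdmt_cb[OF sM]] by blast
  then show "Phi M N f (topspace (at_space M)) = topspace (at_space N)"
    using stdmt.topspace_at[OF sM] stdmt.topspace_at[OF sN] stdmt.alpha_top[OF sM] stdmt.alpha_top[OF sN]
      prox_parts(3)[OF f] by simp
next
  fix U V assume U: "openin (at_space M) U" and V: "openin (at_space M) V"
  obtain u where u: "u \<in> mt_opens M" "U = atoms_below M u" using U unfolding stdmt.openin_at[OF sM] by blast
  obtain v where v: "v \<in> mt_opens M" "V = atoms_below M v" using V unfolding stdmt.openin_at[OF sM] by blast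
  note uv = u v
  have uC: "u \<in> mt_carrier M" and vC: "v \<in> mt_carrier M" using uv stdmt.Op_sub[OF sM] by auto
  have m: "mt_meet M u v \<in> mt_opens M" using stdmt.meet_open[OF sM uv(1,3)] .
  have "U \<inter> V = atoms_below M (mt_meet M u v)" using uv stdmt.alpha_meet[OF sM uC vC] by simp
  then have "Phi M N f (U \<inter> V) = atoms_below N (f (mt_meet M u v))"
    using Phi_open[OF m] prox_parts(1)[OF f] stdmt.Op_sub[OF sM] m by auto
  also have "\<dots> = atoms_below N (f u) \<inter> atoms_below N (f v)"
    using prox_parts(5)[OF f uC vC] stdmt.alpha_meet[OF sN prox_parts(1)[OF f uC] prox_parts(1)[OF f vC]] by simp
  also have "\<dots> = Phi M N f U \<inter> Phi M N f V"
    using Phi_open[OF uv(1)] Phi_open[OF uv(3)] prox_parts(1)[OF f uC] prox_parts(1)[OF f vC] uv by simp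
  finally show "Phi M N f (U \<inter> V) = Phi M N f U \<inter> Phi M N f V" .
next
  fix K assume K: "\<forall>U\<in>K. openin (at_space M) U"
  have "\<And>W. W \<in> K \<Longrightarrow> openin (at_space M) W" using K by blast
  from opens_family[OF this] obtain S where S: "S \<subseteq> mt_opens M" "K = atoms_below M ` S" by blast
  have SC: "S \<subseteq> mt_carrier M" using S stdmt.Op_sub[OF sM] by blast
  have fSC: "f ` S \<subseteq> mt_carrier N" using SC prox_parts(1)[OF f] by blast
  have J: "mt_Join M S \<in> mt_opens M" using stdmt.Join_open[OF sM S(1)] .
  have "\<Union>K = atoms_below M (mt_Join M S)" using S stdmt.alpha_Join[OF sM SC] by simp
  then have "Phi M N f (\<Union>K) = atoms_below N (f (mt_Join M S))"
    using Phi_open[OF J] prox_parts(1)[OF f] stdmt.Op_sub[OF sM] J by auto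
  also have "\<dots> = \<Union>(atoms_below N ` f ` S)"
    using prox_parts(4)[OF f S(1)] stdmt.alpha_Join[OF sN fSC] by simp
  also have "\<dots> = \<Union>(Phi M N f ` K)"
  proof -
    have "Phi M N f (atoms_below M s) = atoms_below N (f s)" if "s \<in> S" for s
      using Phi_open[of s f] that S SC prox_parts(1)[OF f] by blast
    then show ?thesis using S(2) by (auto simp: image_image)
  qed
  finally show "Phi M N f (\<Union>K) = \<Union>(Phi M N f ` K)" .
qed

end


definition constr :: "'b mt \<Rightarrow> 'c mt \<Rightarrow> ('b set \<Rightarrow> 'c set) \<Rightarrow> 'b \<Rightarrow> 'c" where
  "constr M N \<phi> = restrict (\<lambda>a. mt_Join N (Fext (at_space M) \<phi> (atoms_below M a))) (mt_carrier M)"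

context
  fixes M :: "'b mt" and N :: "'c mt" and \<phi>
  assumes sM: "stdmt M" and sN: "stdmt N" and fh: "frame_hom (at_space N) (at_space M) \<phi>"
begin

lemma cons_alpha: assumes a: "a \<in> mt_carrier M"
  shows "constr M N \<phi> a \<in> mt_carrier N" "atoms_below N (constr M N \<phi> a) = Fext (at_space M) \<phi> (atoms_below M a)"
proof -
  have sub: "Fext (at_space M) \<phi> (atoms_below M a) \<subseteq> mt_atoms N"
    using F_sub[OF fh] stdmt.topspace_at[OF sN] by simp
  have e: "constr M N \<phi> a = mt_Join N (Fext (at_space M) \<phi> (atoms_below M a))"
    unfolding constr_def using a by simp
  show "constr M N \<phi> a \<in> mt_carrier N" using stdmt.alpha_JoinA(1)[OF sN sub] e by simp
  show "atoms_below N (constr M N \<phi> a) = Fext (at_space M) \<phi> (atoms_below M a)"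
    using stdmt.alpha_JoinA(2)[OF sN sub] e by simp
qed

lemma cons_open: assumes u: "u \<in> mt_opens M"
  shows "atoms_below N (constr M N \<phi> u) = \<phi> (atoms_below M u)" "constr M N \<phi> u \<in> mt_opens N"
proof -
  have uC: "u \<in> mt_carrier M" using u stdmt.Op_sub[OF sM] by blast
  have ou: "openin (at_space M) (atoms_below M u)" unfolding stdmt.openin_at[OF sM] using u by blast
  show 1: "atoms_below N (constr M N \<phi> u) = \<phi> (atoms_below M u)"
    using cons_alpha(2)[OF uC] F_open[OF fh ou] by simp
  have "openin (at_space N) (\<phi> (atoms_below M u))" using frame_homD(1)[OF fh ou] .
  then obtain w where w: "w \<in> mt_opens N" "\<phi> (atoms_below M u) = atoms_below N w"
    unfolding stdmt.openin_at[OF sN] by blast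
  have "constr M N \<phi> u = w" using stdmt.alpha_open_eq[OF sN cons_alpha(1)[OF uC] w(1)] 1 w(2) by simp
  then show "constr M N \<phi> u \<in> mt_opens N" using w by simp
qed

lemma cons_prox: "constr M N \<phi> \<in> prox_hom M N"
proof -
  have cM: "cb M" and cN: "cb N" using stdmt_cb sM sN by auto
  let ?g = "constr M N \<phi>"
  note ga = cons_alpha
  have inj: "\<And>a b. a \<in> mt_carrier N \<Longrightarrow> b \<in> mt_carrier N \<Longrightarrow> atoms_below N a = atoms_below N b \<Longrightarrow> a = b"
    using stdmt.alpha_inj[OF sN] by blast
  have P0: "\<forall>a\<in>mt_carrier M. ?g a \<in> mt_carrier N" using ga(1) by blast
  have P1a: "\<forall>a\<in>mt_opens M. ?g a \<in> mt_opens N" using cons_open(2) by blast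
  have P1b: "?g (mt_top M) = mt_top N"
  proof -
    have "atoms_below N (?g (mt_top M)) = \<phi> (topspace (at_space M))"
      using cons_open(1)[OF stdmt.top_open[OF sM]] stdmt.alpha_top[OF sM] stdmt.topspace_at[OF sM] by simp
    also have "\<dots> = atoms_below N (mt_top N)"
      using frame_homD(2)[OF fh] stdmt.topspace_at[OF sN] stdmt.alpha_top[OF sN] by simp
    finally show ?thesis using inj ga(1)[OF cb.top_in[OF cM]] cb.top_in[OF cN] by blast
  qed
  have P2: "\<forall>a\<in>mt_carrier M. \<forall>b\<in>mt_carrier M. ?g (mt_meet M a b) = mt_meet N (?g a) (?g b)"
  proof (intro ballI)
    fix a b assume a: "a \<in> mt_carrier M" and b: "b \<in> mt_carrier M"
    have m: "mt_meet M a b \<in> mt_carrier M" using cb.meet_in[OF cM a b] .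
    have "atoms_below N (?g (mt_meet M a b)) = Fext (at_space M) \<phi> (atoms_below M a \<inter> atoms_below M b)"
      using ga(2)[OF m] stdmt.alpha_meet[OF sM a b] by simp
    also have "\<dots> = atoms_below N (?g a) \<inter> atoms_below N (?g b)"
      using F_Int[OF fh] ga(2)[OF a] ga(2)[OF b] by simp
    also have "\<dots> = atoms_below N (mt_meet N (?g a) (?g b))"
      using stdmt.alpha_meet[OF sN ga(1)[OF a] ga(1)[OF b]] by simp
    finally show "?g (mt_meet M a b) = mt_meet N (?g a) (?g b)"
      using inj ga(1)[OF m] cb.meet_in[OF cN ga(1)[OF a] ga(1)[OF b]] by blast
  qed
  have P1m: "\<forall>a\<in>mt_opens M. \<forall>b\<in>mt_opens M. ?g (mt_meet M a b) = mt_meet N (?g a) (?g b)"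
    using P2 stdmt.Op_sub[OF sM] by blast
  have P1j: "\<forall>S. S \<subseteq> mt_opens M \<longrightarrow> ?g (mt_Join M S) = mt_Join N (?g ` S)"
  proof (intro allI impI)
    fix S assume S: "S \<subseteq> mt_opens M"
    have SC: "S \<subseteq> mt_carrier M" using S stdmt.Op_sub[OF sM] by blast
    have gS: "?g ` S \<subseteq> mt_carrier N" using ga(1) SC by blast
    have J: "mt_Join M S \<in> mt_opens M" using stdmt.Join_open[OF sM S] .
    have os: "\<And>U. U \<in> atoms_below M ` S \<Longrightarrow> openin (at_space M) U"
      using S unfolding stdmt.openin_at[OF sM] by blast
    have "atoms_below N (?g (mt_Join M S)) = \<phi> (\<Union>(atoms_below M ` S))"
      using cons_open(1)[OF J] stdmt.alpha_Join[OF sM SC] by simp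
    also have "\<dots> = \<Union>(\<phi> ` atoms_below M ` S)" using frame_homD(4)[OF fh os] by blast
    also have "\<dots> = \<Union>(atoms_below N ` ?g ` S)"
    proof -
      have "\<phi> (atoms_below M s) = atoms_below N (?g s)" if "s \<in> S" for s
        using cons_open(1) that S by blast
      then show ?thesis by (auto simp: image_image)
    qed
    also have "\<dots> = atoms_below N (mt_Join N (?g ` S))" using stdmt.alpha_Join[OF sN gS] by simp
    finally show "?g (mt_Join M S) = mt_Join N (?g ` S)"
      using inj ga(1)[OF cb.Join_in[OF cM SC]] cb.Join_in[OF cN gS] by blast
  qed
  have P3: "\<forall>S. finite S \<and> S \<subseteq> mt_lc M \<longrightarrow> ?g (mt_Join M S) = mt_Join N (?g ` S)"
  proof (intro allI impI)
    fix S assume "finite S \<and> S \<subseteq> mt_lc M"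
    then have fin: "finite S" and Sl: "S \<subseteq> mt_lc M" by auto
    have SC: "S \<subseteq> mt_carrier M" using Sl stdmt.lc_sub[OF sM] by blast
    have gS: "?g ` S \<subseteq> mt_carrier N" using ga(1) SC by blast
    have "\<forall>s\<in>S. \<exists>p. fst p \<in> mt_opens M \<and> snd p \<in> mt_opens M \<and>
            atoms_below M s = atoms_below M (fst p) - atoms_below M (snd p)"
    proof
      fix s assume "s \<in> S"
      then obtain u v where "u \<in> mt_opens M" "v \<in> mt_opens M" "atoms_below M s = atoms_below M u - atoms_below M v"
        using Sl stdmt.lc_char[OF sM] by blast
      then show "\<exists>p. fst p \<in> mt_opens M \<and> snd p \<in> mt_opens M \<and>
            atoms_below M s = atoms_below M (fst p) - atoms_below M (snd p)" by (intro exI[of _ "(u,v)"]) simp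
    qed
    from bchoice[OF this] obtain p where p: "\<forall>s\<in>S. fst (p s) \<in> mt_opens M \<and> snd (p s) \<in> mt_opens M \<and>
            atoms_below M s = atoms_below M (fst (p s)) - atoms_below M (snd (p s))" by blast
    define u where "u s = atoms_below M (fst (p s))" for s
    define v where "v s = atoms_below M (snd (p s))" for s
    have op: "\<forall>s\<in>S. openin (at_space M) (u s) \<and> openin (at_space M) (v s)"
      unfolding u_def v_def stdmt.openin_at[OF sM] using p by blast
    have as: "\<forall>s\<in>S. atoms_below M s = u s - v s" unfolding u_def v_def using p by blast
    have "atoms_below N (?g (mt_Join M S)) = Fext (at_space M) \<phi> (\<Union>s\<in>S. u s - v s)"
      using ga(2)[OF cb.Join_in[OF cM SC]] stdmt.alpha_Join[OF sM SC] as by simp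
    also have "\<dots> = (\<Union>s\<in>S. \<phi> (u s) - \<phi> (v s))" using F_union_lc[OF fh fin op] .
    also have "\<dots> = (\<Union>s\<in>S. atoms_below N (?g s))"
    proof -
      have "atoms_below N (?g s) = \<phi> (u s) - \<phi> (v s)" if "s \<in> S" for s
        using ga(2) SC that as F_lc[OF fh] op by (metis subsetD)
      then show ?thesis by simp
    qed
    also have "\<dots> = atoms_below N (mt_Join N (?g ` S))" using stdmt.alpha_Join[OF sN gS] by (simp add: image_image)
    finally show "?g (mt_Join M S) = mt_Join N (?g ` S)"
      using inj ga(1)[OF cb.Join_in[OF cM SC]] cb.Join_in[OF cN gS] by blast
  qed
  have P4: "\<forall>a\<in>mt_carrier M. ?g a = mt_Join N {?g x | x. x \<in> mt_lc M \<and> mt_le M x a}"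
  proof
    fix a assume a: "a \<in> mt_carrier M"
    let ?T = "{?g x | x. x \<in> mt_lc M \<and> mt_le M x a}"
    have TC: "?T \<subseteq> mt_carrier N" using ga(1) stdmt.lc_sub[OF sM] by blast
    have fam: "atoms_below N ` ?T = {Fext (at_space M) \<phi> (U - V) | U V. openin (at_space M) U \<and> openin (at_space M) V \<and> U - V \<subseteq> atoms_below M a}"
    proof
      show "atoms_below N ` ?T \<subseteq> {Fext (at_space M) \<phi> (U - V) | U V. openin (at_space M) U \<and> openin (at_space M) V \<and> U - V \<subseteq> atoms_below M a}"
      proof
        fix Z assume "Z \<in> atoms_below N ` ?T"
        then obtain x where x: "x \<in> mt_lc M" "mt_le M x a" "Z = atoms_below N (?g x)" by blast
        have xC: "x \<in> mt_carrier M" using x stdmt.lc_sub[OF sM] by blast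
        obtain u v where uv: "u \<in> mt_opens M" "v \<in> mt_opens M" "atoms_below M x = atoms_below M u - atoms_below M v"
          using x(1) stdmt.lc_char[OF sM] by blast
        have "Z = Fext (at_space M) \<phi> (atoms_below M u - atoms_below M v)" using x(3) ga(2)[OF xC] uv by simp
        moreover have "atoms_below M u - atoms_below M v \<subseteq> atoms_below M a"
          using uv(3) stdmt.alpha_mono[OF sM xC a x(2)] by simp
        ultimately show "Z \<in> {Fext (at_space M) \<phi> (U - V) | U V. openin (at_space M) U \<and> openin (at_space M) V \<and> U - V \<subseteq> atoms_below M a}"
          unfolding stdmt.openin_at[OF sM] using uv by blast
      qed
      show "{Fext (at_space M) \<phi> (U - V) | U V. openin (at_space M) U \<and> openin (at_space M) V \<and> U - V \<subseteq> atoms_below M a} \<subseteq> atoms_below N ` ?T"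
      proof
        fix Z assume "Z \<in> {Fext (at_space M) \<phi> (U - V) | U V. openin (at_space M) U \<and> openin (at_space M) V \<and> U - V \<subseteq> atoms_below M a}"
        then obtain U V where UV: "openin (at_space M) U" "openin (at_space M) V" "U - V \<subseteq> atoms_below M a"
          "Z = Fext (at_space M) \<phi> (U - V)" by blast
        obtain u where u: "u \<in> mt_opens M" "U = atoms_below M u" using UV(1) unfolding stdmt.openin_at[OF sM] by blast
        obtain v where v: "v \<in> mt_opens M" "V = atoms_below M v" using UV(2) unfolding stdmt.openin_at[OF sM] by blast
        have "U - V \<subseteq> mt_atoms M" using u stdmt.alpha_sub[OF sM] by blast
        then obtain x where x: "x \<in> mt_carrier M" "atoms_below M x = U - V" using stdmt.alpha_surj[OF sM] by blast
        have xl: "x \<in> mt_lc M" unfolding stdmt.lc_char[OF sM] using x u v by blast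
        have xa: "mt_le M x a" using stdmt.alpha_le_iff[OF sM x(1) a] x UV(3) by simp
        have "Z = atoms_below N (?g x)" using ga(2)[OF x(1)] x UV(4) by simp
        then show "Z \<in> atoms_below N ` ?T" using xl xa by blast
      qed
    qed
    have "atoms_below N (?g a) = \<Union>(atoms_below N ` ?T)"
      using ga(2)[OF a] F_P4[OF fh, of "atoms_below M a"] fam by simp
    also have "\<dots> = atoms_below N (mt_Join N ?T)" using stdmt.alpha_Join[OF sN TC] by simp
    finally show "?g a = mt_Join N ?T" using inj ga(1)[OF a] cb.Join_in[OF cN TC] by blast
  qed
  have ext: "?g \<in> extensional (mt_carrier M)" unfolding constr_def by simp
  show ?thesis unfolding prox_hom_def proximity_def
    using P0 P1a P1b P1m P1j P2 P3 P4 ext by (simp add: Pi_iff)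
qed

lemma cons_Phi: "u \<in> mt_opens M \<Longrightarrow> Phi M N (constr M N \<phi>) (atoms_below M u) = \<phi> (atoms_below M u)"
  using Phi_open[OF sM sN] cons_open cons_alpha(1) stdmt.Op_sub[OF sM] by (metis subsetD)

end


definition pmt :: "'a topology \<Rightarrow> 'a set mt" where
  "pmt X = \<lparr>mt_carrier = Pow (topspace X), mt_le = (\<subseteq>), mt_box = (\<lambda>a. X interior_of a)\<rparr>"

context
  fixes X :: "'a topology"
begin

abbreviation "T \<equiv> topspace X"

lemma pm_simps[simp]: "mt_carrier (pmt X) = Pow T" "mt_le (pmt X) = (\<subseteq>)" "mt_box (pmt X) a = X interior_of a"
  unfolding pmt_def by simp_all

lemma p_lub: assumes S: "S \<subseteq> Pow T" shows "is_lub (pmt X) S x \<longleftrightarrow> x = \<Union>S"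
proof
  assume l: "is_lub (pmt X) S x"
  have "\<Union>S \<in> Pow T" using S by blast
  then have "x \<subseteq> \<Union>S" using l unfolding is_lub_def by auto
  moreover have "\<Union>S \<subseteq> x" using l unfolding is_lub_def by auto
  ultimately show "x = \<Union>S" by blast
qed (use S in \<open>auto simp: is_lub_def\<close>)

lemma p_glb: assumes S: "S \<subseteq> Pow T" and ne: "S \<noteq> {}" shows "is_glb (pmt X) S x \<longleftrightarrow> x = \<Inter>S"
proof
  assume l: "is_glb (pmt X) S x"
  have "\<Inter>S \<in> Pow T" using S ne by blast
  then have "\<Inter>S \<subseteq> x" using l unfolding is_glb_def by auto
  moreover have "x \<subseteq> \<Inter>S" using l unfolding is_glb_def by auto
  ultimately show "x = \<Inter>S" by blast
next
  assume "x = \<Inter>S" then show "is_glb (pmt X) S x" using S ne unfolding is_glb_def by auto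
qed

lemma p_Join: "S \<subseteq> Pow T \<Longrightarrow> mt_Join (pmt X) S = \<Union>S"
  unfolding mt_Join_def by (rule the_equality) (simp_all add: p_lub)

lemma p_meet: "a \<subseteq> T \<Longrightarrow> b \<subseteq> T \<Longrightarrow> mt_meet (pmt X) a b = a \<inter> b"
  unfolding mt_meet_def mt_Meet_def by (rule the_equality) (simp_all add: p_glb)

lemma p_join: "a \<subseteq> T \<Longrightarrow> b \<subseteq> T \<Longrightarrow> mt_join (pmt X) a b = a \<union> b"
  unfolding mt_join_def using p_Join[of "{a,b}"] by simp

lemma p_top: "mt_top (pmt X) = T"
  unfolding mt_top_def using p_Join[of "Pow T"] by simp

lemma p_bot: "mt_bot (pmt X) = {}"
  unfolding mt_bot_def using p_Join[of "{}"] by simp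

lemma p_neg: assumes a: "a \<subseteq> T" shows "mt_neg (pmt X) a = T - a"
proof -
  have "(b \<in> Pow T \<and> mt_join (pmt X) a b = mt_top (pmt X) \<and> mt_meet (pmt X) a b = mt_bot (pmt X)) \<longleftrightarrow> b = T - a" for b
    using p_join[OF a] p_meet[OF a] p_top p_bot a by auto
  then show ?thesis unfolding mt_neg_def by simp
qed

lemma p_cb: "complete_boolean (pmt X)"
  unfolding complete_boolean_def
proof (intro conjI ballI allI impI)
  show "\<exists>x. is_lub (pmt X) S x" if "S \<subseteq> mt_carrier (pmt X)" for S using p_lub that by auto
next
  fix a b c assume "a \<in> mt_carrier (pmt X)" "b \<in> mt_carrier (pmt X)" "c \<in> mt_carrier (pmt X)"
  then have abc: "a \<subseteq> T" "b \<subseteq> T" "c \<subseteq> T" by auto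
  have "mt_meet (pmt X) a (mt_join (pmt X) b c) = a \<inter> (b \<union> c)"
    using p_join[OF abc(2,3)] p_meet[of a "b \<union> c"] abc by simp
  moreover have "mt_join (pmt X) (mt_meet (pmt X) a b) (mt_meet (pmt X) a c) = (a \<inter> b) \<union> (a \<inter> c)"
    using p_meet[OF abc(1,2)] p_meet[OF abc(1,3)] p_join[of "a \<inter> b" "a \<inter> c"] abc by auto
  ultimately show "mt_meet (pmt X) a (mt_join (pmt X) b c) =
        mt_join (pmt X) (mt_meet (pmt X) a b) (mt_meet (pmt X) a c)" by auto
next
  fix a assume a: "a \<in> mt_carrier (pmt X)"
  show "\<exists>b\<in>mt_carrier (pmt X). mt_join (pmt X) a b = mt_top (pmt X) \<and> mt_meet (pmt X) a b = mt_bot (pmt X)"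
    using a p_join p_meet p_top p_bot by (intro bexI[of _ "T - a"]) auto
qed auto

lemma p_MT: "MT_algebra (pmt X)"
  unfolding MT_algebra_def
proof (intro conjI ballI)
  show "complete_boolean (pmt X)" by (rule p_cb)
  show "mt_box (pmt X) a \<in> mt_carrier (pmt X)" if "a \<in> mt_carrier (pmt X)" for a
    using that interior_of_subset[of X a] by auto
  show "mt_box (pmt X) (mt_top (pmt X)) = mt_top (pmt X)" using p_top by simp
  show "mt_box (pmt X) (mt_meet (pmt X) a b) = mt_meet (pmt X) (mt_box (pmt X) a) (mt_box (pmt X) b)"
    if "a \<in> mt_carrier (pmt X)" "b \<in> mt_carrier (pmt X)" for a b
  proof -
    have ab: "a \<subseteq> T" "b \<subseteq> T" using that by auto
    have "X interior_of a \<subseteq> T" "X interior_of b \<subseteq> T"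
      using ab interior_of_subset[of X a] interior_of_subset[of X b] by auto
    then show ?thesis using p_meet[OF ab] p_meet[of "X interior_of a" "X interior_of b"] interior_of_Int[of X a b] by simp
  qed
  show "mt_le (pmt X) (mt_box (pmt X) a) a" for a by (simp add: interior_of_subset)
  show "mt_le (pmt X) (mt_box (pmt X) a) (mt_box (pmt X) (mt_box (pmt X) a))" for a by simp
qed

lemma p_atoms: "mt_atoms (pmt X) = (\<lambda>x. {x}) ` T"
proof
  show "mt_atoms (pmt X) \<subseteq> (\<lambda>x. {x}) ` T"
  proof
    fix a assume a: "a \<in> mt_atoms (pmt X)"
    then have aT: "a \<subseteq> T" and ne: "a \<noteq> {}" and mn: "\<forall>y\<subseteq>T. y \<subseteq> a \<longrightarrow> y = {} \<or> y = a"
      unfolding mt_atoms_def p_bot by auto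
    obtain x where x: "x \<in> a" using ne by blast
    have "{x} = a" using mn[rule_format, of "{x}"] x aT by blast
    then show "a \<in> (\<lambda>x. {x}) ` T" using x aT by blast
  qed
  show "(\<lambda>x. {x}) ` T \<subseteq> mt_atoms (pmt X)"
    unfolding mt_atoms_def p_bot by auto
qed

lemma p_alpha: "a \<subseteq> T \<Longrightarrow> atoms_below (pmt X) a = (\<lambda>x. {x}) ` a"
  unfolding atoms_below_def p_atoms by auto

lemma p_opens: "mt_opens (pmt X) = {u. openin X u}"
  unfolding mt_opens_def using interior_of_eq openin_subset by fastforce

lemma p_STDMT: assumes TD: "TD_space X" shows "STDMT (pmt X)"
  unfolding STDMT_def
proof (intro conjI)
  show "MT_algebra (pmt X)" by (rule p_MT)
  show "spatial (pmt X)" unfolding spatial_def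
  proof (rule inj_onI)
    fix a b assume "a \<in> mt_carrier (pmt X)" "b \<in> mt_carrier (pmt X)" "atoms_below (pmt X) a = atoms_below (pmt X) b"
    then have "(\<lambda>x. {x}) ` a = (\<lambda>x. {x}) ` b" using p_alpha by auto
    then show "a = b" using inj_image_eq_iff[OF inj_singleton] by blast
  qed
  have lc: "{x} \<in> mt_lc (pmt X)" if x: "x \<in> T" for x
  proof -
    obtain U where U: "openin X U" "x \<in> U" "closedin (subtopology X U) {x}" using TD x unfolding TD_space_def by blast
    then obtain c where c: "closedin X c" "{x} = c \<inter> U" unfolding closedin_subtopology by blast
    have cT: "c \<subseteq> T" using closedin_subset[OF c(1)] .
    have UT: "U \<subseteq> T" using openin_subset[OF U(1)] .
    have "openin X (T - c)" using c(1) unfolding closedin_def by (elim conjE)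
    then have i: "X interior_of (T - c) = T - c" by (simp add: interior_of_eq)
    have "mt_dia (pmt X) c = mt_neg (pmt X) (X interior_of (T - c))"
      unfolding mt_dia_def using p_neg[OF cT] by simp
    also have "\<dots> = T - (T - c)" using i p_neg[of "T - c"] by simp
    finally have d: "mt_dia (pmt X) c = c" using cT by blast
    have b: "mt_box (pmt X) U = U" using U(1) by (simp add: interior_of_eq)
    have "{x} = mt_meet (pmt X) (mt_box (pmt X) U) (mt_dia (pmt X) c)"
      using d b p_meet[OF UT cT] c by auto
    then show ?thesis unfolding mt_lc_def using x cT UT by auto
  qed
  show "TD_algebra (pmt X)" unfolding TD_algebra_def
  proof
    fix a assume a: "a \<in> mt_carrier (pmt X)"
    have "a = mt_Join (pmt X) ((\<lambda>x. {x}) ` a)" using a p_Join[of "(\<lambda>x. {x}) ` a"] by auto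
    moreover have "(\<lambda>x. {x}) ` a \<subseteq> mt_lc (pmt X)" using a lc by auto
    ultimately show "\<exists>S\<subseteq>mt_lc (pmt X). a = mt_Join (pmt X) S" by blast
  qed
qed

end

lemma ess_surj:
  fixes X :: "'a topology"
  assumes TD: "TD_space X"
  shows "\<exists>M :: 'a set mt. STDMT M \<and>
             (\<exists>h\<in>sober_hom X (at_space M). \<exists>k\<in>sober_hom (at_space M) X.
                sober_comp X (at_space M) X k h = sober_id X \<and>
                sober_comp (at_space M) X (at_space M) h k = sober_id (at_space M))"
proof -
  let ?M = "pmt X"
  let ?T = "topspace X"
  have st: "STDMT ?M" using p_STDMT[OF TD] .
  then have sM: "stdmt ?M" unfolding stdmt_def .
  have oat: "openin (at_space ?M) W \<longleftrightarrow> (\<exists>u. openin X u \<and> W = (\<lambda>x. {x}) ` u)" for W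
  proof
    assume "openin (at_space ?M) W"
    then obtain u where u: "u \<in> mt_opens ?M" "W = atoms_below ?M u" unfolding stdmt.openin_at[OF sM] by blast
    then have ou: "openin X u" using p_opens by blast
    then have "W = (\<lambda>x. {x}) ` u" using u(2) p_alpha[OF openin_subset[OF ou]] by simp
    then show "\<exists>u. openin X u \<and> W = (\<lambda>x. {x}) ` u" using ou by blast
  next
    assume "\<exists>u. openin X u \<and> W = (\<lambda>x. {x}) ` u"
    then obtain u where u: "openin X u" "W = (\<lambda>x. {x}) ` u" by blast
    then have "u \<in> mt_opens ?M" "W = atoms_below ?M u" using p_opens p_alpha[OF openin_subset[OF u(1)]] by auto
    then show "openin (at_space ?M) W" unfolding stdmt.openin_at[OF sM] by blast
  qed
  have tat: "topspace (at_space ?M) = (\<lambda>x. {x}) ` ?T"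
    using stdmt.topspace_at[OF sM] p_atoms by simp
  define \<phi> where "\<phi> W = {x \<in> ?T. {x} \<in> W}" for W :: "'a set set"
  define \<psi> where "\<psi> U = (\<lambda>x. {x}) ` U" for U :: "'a set"
  have fp: "frame_hom X (at_space ?M) \<phi>"
    unfolding frame_hom_def
  proof (intro conjI allI impI)
    fix V assume "openin (at_space ?M) V"
    then obtain u where u: "openin X u" "V = (\<lambda>x. {x}) ` u" using oat by blast
    have "\<phi> V = u" unfolding \<phi>_def using u openin_subset by fastforce
    then show "openin X (\<phi> V)" using u by simp
  next
    show "\<phi> (topspace (at_space ?M)) = ?T" unfolding \<phi>_def tat by auto
  qed (auto simp: \<phi>_def)
  have fs: "frame_hom (at_space ?M) X \<psi>"
    unfolding frame_hom_def
  proof (intro conjI allI impI)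
    fix V assume "openin X V" then show "openin (at_space ?M) (\<psi> V)" unfolding oat \<psi>_def by blast
  next
    show "\<psi> ?T = topspace (at_space ?M)" unfolding \<psi>_def tat ..
  next
    fix U V show "\<psi> (U \<inter> V) = \<psi> U \<inter> \<psi> V" unfolding \<psi>_def by auto
  next
    fix K :: "'a set set" show "\<psi> (\<Union>K) = \<Union>(\<psi> ` K)" unfolding \<psi>_def by auto
  qed
  define h where "h = pt X (at_space ?M) \<phi>"
  define k where "k = pt (at_space ?M) X \<psi>"
  have h: "h \<in> sober_hom X (at_space ?M)" unfolding h_def by (rule pt_sober[OF fp])
  have k: "k \<in> sober_hom (at_space ?M) X" unfolding k_def by (rule pt_sober[OF fs])
  have c1: "sober_comp X (at_space ?M) X k h = sober_id X"
  proof -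
    have "sober_comp X (at_space ?M) X k h = pt X X (\<phi> \<circ> \<psi>)"
      unfolding h_def k_def by (rule sober_comp_pt[OF fp fs])
    also have "\<dots> = pt X X (\<lambda>V. V)"
      by (rule pt_cong) (auto simp: \<phi>_def \<psi>_def dest: openin_subset)
    finally show ?thesis using sober_id_pt by metis
  qed
  have c2: "sober_comp (at_space ?M) X (at_space ?M) h k = sober_id (at_space ?M)"
  proof -
    have "sober_comp (at_space ?M) X (at_space ?M) h k = pt (at_space ?M) (at_space ?M) (\<psi> \<circ> \<phi>)"
      unfolding h_def k_def by (rule sober_comp_pt[OF fs fp])
    also have "\<dots> = pt (at_space ?M) (at_space ?M) (\<lambda>V. V)"
    proof (rule pt_cong)
      fix V assume "openin (at_space ?M) V"
      then obtain u where u: "openin X u" "V = (\<lambda>x. {x}) ` u" using oat by blast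
      then show "(\<psi> \<circ> \<phi>) V = V" unfolding \<phi>_def \<psi>_def using openin_subset by fastforce
    qed
    finally show ?thesis using sober_id_pt by metis
  qed
  show ?thesis using st h k c1 c2 by blast
qed


lemma c_id: assumes st: "STDMT M" shows "at_map M M (prox_id M) = sober_id (at_space M)"
proof -
  have sM: "stdmt M" using st unfolding stdmt_def .
  have "at_map M M (prox_id M) = pt (at_space M) (at_space M) (Phi M M (prox_id M))"
    by (rule at_map_pt[OF sM sM])
  also have "\<dots> = pt (at_space M) (at_space M) (\<lambda>V. V)"
  proof (rule pt_cong)
    fix V assume "openin (at_space M) V"
    then obtain u where u: "u \<in> mt_opens M" "V = atoms_below M u" unfolding stdmt.openin_at[OF sM] by blast
    have uC: "u \<in> mt_carrier M" using u stdmt.Op_sub[OF sM] by blast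
    have pu: "prox_id M u = u" unfolding prox_id_def using uC stdmt.Join_lc_below[OF sM uC] by simp
    show "Phi M M (prox_id M) V = V" using Phi_open[OF sM sM u(1), of "prox_id M"] pu uC u(2) by simp
  qed
  finally show ?thesis using sober_id_pt by metis
qed

lemma c_comp:
  assumes s1: "STDMT M1" and s2: "STDMT M2" and s3: "STDMT M3"
    and f: "f \<in> prox_hom M1 M2" and g: "g \<in> prox_hom M2 M3"
  shows "at_map M1 M3 (prox_comp M1 M3 g f) =
          sober_comp (at_space M3) (at_space M2) (at_space M1) (at_map M1 M2 f) (at_map M2 M3 g)"
proof -
  have sM1: "stdmt M1" and sM2: "stdmt M2" and sM3: "stdmt M3" using s1 s2 s3 unfolding stdmt_def by auto
  have ff: "frame_hom (at_space M2) (at_space M1) (Phi M1 M2 f)" using Phi_frame[OF sM1 sM2 f] .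
  have fg: "frame_hom (at_space M3) (at_space M2) (Phi M2 M3 g)" using Phi_frame[OF sM2 sM3 g] .
  have "sober_comp (at_space M3) (at_space M2) (at_space M1) (at_map M1 M2 f) (at_map M2 M3 g)
        = pt (at_space M3) (at_space M1) (Phi M2 M3 g \<circ> Phi M1 M2 f)"
    unfolding at_map_pt[OF sM1 sM2] at_map_pt[OF sM2 sM3] by (rule sober_comp_pt[OF fg ff])
  also have "\<dots> = pt (at_space M3) (at_space M1) (Phi M1 M3 (prox_comp M1 M3 g f))"
  proof (rule pt_cong)
    fix V assume "openin (at_space M1) V"
    then obtain u where u: "u \<in> mt_opens M1" "V = atoms_below M1 u" unfolding stdmt.openin_at[OF sM1] by blast
    have uC: "u \<in> mt_carrier M1" using u stdmt.Op_sub[OF sM1] by blast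
    have fu: "f u \<in> mt_opens M2" using prox_parts(2)[OF f u(1)] .
    have fuC: "f u \<in> mt_carrier M2" using prox_parts(1)[OF f uC] .
    have gfuC: "g (f u) \<in> mt_carrier M3" using prox_parts(1)[OF g fuC] .
    let ?S = "{g (f x) | x. x \<in> mt_lc M1 \<and> mt_le M1 x u}"
    have SC: "?S \<subseteq> mt_carrier M3"
      using prox_parts(1)[OF g] prox_parts(1)[OF f] stdmt.lc_sub[OF sM1] by blast
    have mem: "g (f u) \<in> ?S" using stdmt.open_lc[OF sM1 u(1)] cb.le_refl[OF stdmt_cb[OF sM1] uC] by blast
    have le: "mt_le M3 s (g (f u))" if "s \<in> ?S" for s
    proof -
      obtain x where x: "s = g (f x)" "x \<in> mt_lc M1" "mt_le M1 x u" using \<open>s \<in> ?S\<close> by blast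
      have xC: "x \<in> mt_carrier M1" using x(2) stdmt.lc_sub[OF sM1] by blast
      have "mt_le M2 (f x) (f u)" using pf_mono[OF sM1 sM2 f xC uC x(3)] .
      then show ?thesis using pf_mono[OF sM2 sM3 g prox_parts(1)[OF f xC] fuC] x(1) by simp
    qed
    have pc: "prox_comp M1 M3 g f u = g (f u)"
      unfolding prox_comp_def using uC stdmt.Join_max[OF sM3 SC mem le] by simp
    have "(Phi M2 M3 g \<circ> Phi M1 M2 f) V = atoms_below M3 (g (f u))"
      using Phi_open[OF sM1 sM2 u(1), of f] fuC Phi_open[OF sM2 sM3 fu, of g] gfuC u(2) by simp
    also have "\<dots> = Phi M1 M3 (prox_comp M1 M3 g f) V"
      using Phi_open[OF sM1 sM3 u(1), of "prox_comp M1 M3 g f"] pc gfuC u(2) by simp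
    finally show "(Phi M2 M3 g \<circ> Phi M1 M2 f) V = Phi M1 M3 (prox_comp M1 M3 g f) V" .
  qed
  also have "\<dots> = at_map M1 M3 (prox_comp M1 M3 g f)" using at_map_pt[OF sM1 sM3] by simp
  finally show ?thesis by simp
qed

lemma c_bij: assumes sM': "STDMT M" and sN': "STDMT N"
  shows "bij_betw (at_map M N) (prox_hom M N) (sober_hom (at_space N) (at_space M))"
proof -
  have sM: "stdmt M" and sN: "stdmt N" using sM' sN' unfolding stdmt_def by auto
  have into: "at_map M N f \<in> sober_hom (at_space N) (at_space M)" if f: "f \<in> prox_hom M N" for f
    unfolding at_map_pt[OF sM sN] by (rule pt_sober[OF Phi_frame[OF sM sN f]])
  have inj: "inj_on (at_map M N) (prox_hom M N)"
  proof (rule inj_onI)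
    fix f g assume f: "f \<in> prox_hom M N" and g: "g \<in> prox_hom M N" and eq: "at_map M N f = at_map M N g"
    show "f = g"
    proof (rule pf_determined[OF sM sN f g])
      fix u assume u: "u \<in> mt_opens M"
      have uC: "u \<in> mt_carrier M" using u stdmt.Op_sub[OF sM] by blast
      have ou: "openin (at_space M) (atoms_below M u)" unfolding stdmt.openin_at[OF sM] using u by blast
      have "Phi M N f (atoms_below M u) = Phi M N g (atoms_below M u)"
        using pt_inj[OF Phi_frame[OF sM sN f] Phi_frame[OF sM sN g] _ ou] eq at_map_pt[OF sM sN] by metis
      then have "atoms_below N (f u) = atoms_below N (g u)"
        using Phi_open[OF sM sN u] prox_parts(1)[OF f uC] prox_parts(1)[OF g uC] by simp
      then show "f u = g u" using stdmt.alpha_inj[OF sN prox_parts(1)[OF f uC] prox_parts(1)[OF g uC]] by simp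
    qed
  qed
  have surj: "sober_hom (at_space N) (at_space M) \<subseteq> at_map M N ` prox_hom M N"
  proof
    fix h assume h: "h \<in> sober_hom (at_space N) (at_space M)"
    let ?\<phi> = "phi_of (at_space N) h"
    have fh: "frame_hom (at_space N) (at_space M) ?\<phi>" and he: "h = pt (at_space N) (at_space M) ?\<phi>"
      using sober_hom_frame[OF h] by auto
    have gp: "constr M N ?\<phi> \<in> prox_hom M N" using cons_prox[OF sM sN fh] .
    have "at_map M N (constr M N ?\<phi>) = pt (at_space N) (at_space M) (Phi M N (constr M N ?\<phi>))"
      by (rule at_map_pt[OF sM sN])
    also have "\<dots> = pt (at_space N) (at_space M) ?\<phi>"
    proof (rule pt_cong)
      fix V assume "openin (at_space M) V"
      then obtain u where u: "u \<in> mt_opens M" "V = atoms_below M u" unfolding stdmt.openin_at[OF sM] by blast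
      then show "Phi M N (constr M N ?\<phi>) V = ?\<phi> V" using cons_Phi[OF sM sN fh u(1)] by simp
    qed
    finally have "at_map M N (constr M N ?\<phi>) = h" using he by simp
    then show "h \<in> at_map M N ` prox_hom M N" using gp by (metis image_eqI)
  qed
  show ?thesis unfolding bij_betw_def using inj into surj by blast
qed

theorem corollary6p17:
  shows
   \<comment> \<open>the atom functor lands in T_D Top_S\<close>
   "(\<forall>M :: 'b mt. STDMT M \<longrightarrow> TD_space (at_space M))
    \<and> (\<forall>(M :: 'b mt) (N :: 'c mt) f. STDMT M \<and> STDMT N \<and> f \<in> prox_hom M N \<longrightarrow>
          at_map M N f \<in> sober_hom (at_space N) (at_space M))
    \<comment> \<open>it preserves identities and (contravariantly) composition\<close>
    \<and> (\<forall>M :: 'b mt. STDMT M \<longrightarrow> at_map M M (prox_id M) = sober_id (at_space M))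
    \<and> (\<forall>(M1 :: 'b mt) (M2 :: 'c mt) (M3 :: 'd mt) f g.
          STDMT M1 \<and> STDMT M2 \<and> STDMT M3 \<and> f \<in> prox_hom M1 M2 \<and> g \<in> prox_hom M2 M3 \<longrightarrow>
          at_map M1 M3 (prox_comp M1 M3 g f) =
          sober_comp (at_space M3) (at_space M2) (at_space M1) (at_map M1 M2 f) (at_map M2 M3 g))
    \<comment> \<open>it is fully faithful\<close>
    \<and> (\<forall>(M :: 'b mt) (N :: 'c mt). STDMT M \<and> STDMT N \<longrightarrow>
          bij_betw (at_map M N) (prox_hom M N) (sober_hom (at_space N) (at_space M)))
    \<comment> \<open>it is essentially surjective onto T_D spaces\<close>
    \<and> (\<forall>X :: 'a topology. TD_space X \<longrightarrow>
          (\<exists>M :: 'a set mt. STDMT M \<and>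
             (\<exists>h\<in>sober_hom X (at_space M). \<exists>k\<in>sober_hom (at_space M) X.
                sober_comp X (at_space M) X k h = sober_id X \<and>
                sober_comp (at_space M) X (at_space M) h k = sober_id (at_space M))))"
proof (intro conjI allI impI)
  fix M :: "'b mt" assume "STDMT M"
  then show "TD_space (at_space M)" using stdmt.TD_at unfolding stdmt_def by blast
next
  fix M :: "'b mt" and N :: "'c mt" and f assume a: "STDMT M \<and> STDMT N \<and> f \<in> prox_hom M N"
  then have sM: "stdmt M" and sN: "stdmt N" and f: "f \<in> prox_hom M N" unfolding stdmt_def by auto
  show "at_map M N f \<in> sober_hom (at_space N) (at_space M)"
    unfolding at_map_pt[OF sM sN] by (rule pt_sober[OF Phi_frame[OF sM sN f]])
next
  fix M :: "'b mt" assume "STDMT M"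
  then show "at_map M M (prox_id M) = sober_id (at_space M)" by (rule c_id)
next
  fix M1 :: "'b mt" and M2 :: "'c mt" and M3 :: "'d mt" and f g
  assume "STDMT M1 \<and> STDMT M2 \<and> STDMT M3 \<and> f \<in> prox_hom M1 M2 \<and> g \<in> prox_hom M2 M3"
  then show "at_map M1 M3 (prox_comp M1 M3 g f) =
          sober_comp (at_space M3) (at_space M2) (at_space M1) (at_map M1 M2 f) (at_map M2 M3 g)"
    using c_comp by blast
next
  fix M :: "'b mt" and N :: "'c mt" assume "STDMT M \<and> STDMT N"
  then show "bij_betw (at_map M N) (prox_hom M N) (sober_hom (at_space N) (at_space M))"
    using c_bij by blast
next
  fix X :: "'a topology" assume "TD_space X"
  then show "\<exists>M :: 'a set mt. STDMT M \<and>
             (\<exists>h\<in>sober_hom X (at_space M). \<exists>k\<in>sober_hom (at_space M) X.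
                sober_comp X (at_space M) X k h = sober_id X \<and>
                sober_comp (at_space M) X (at_space M) h k = sober_id (at_space M))"
    by (rule ess_surj)
qed

end
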